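(* For each $m,\varepsilon>0$ and $(x,t)\in\varepsilon\mathbb{Z}^2$, $$\widetilde{A}_1(x,t,m,\varepsilon)=\pm\frac{im\varepsilon^2}{2\pi}\int_{-\pi/\varepsilon}^{\pi/\varepsilon}\frac{e^{ipx-i\omega_pt}\,dp}{\sqrt{m^2\varepsilon^2+\sin^2(p\varepsilon)}},$$ $$\widetilde{A}_2(x,t,m,\varepsilon)=\pm\frac{\varepsilon}{2\pi}\int_{-\pi/\varepsilon}^{\pi/\varepsilon}\Big(1+\frac{\sin(p\varepsilon)}{\sqrt{m^2\varepsilon^2+\sin^2(p\varepsilon)}}\Big)e^{ipx-i\omega_pt}\,dp,$$ where the minus sign in the expression for $\widetilde{A}_k$ is taken when $t<0$ and $(x+t)/\varepsilon+k$ is even (and the plus sign otherwise), and $\omega_p:=\frac{1}{\varepsilon}\arccos\Big(\frac{\cos p\varepsilon}{\sqrt{1+m^2\varepsilon^2}}\Big)$.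
   Context: Fix $\varepsilon,m>0$. For $\delta\in(0,1)$ let $A_k(x,t)=A_k(x,t,m,\varepsilon,\delta)$, $k\in\{1,2\}$, be the unique pair of complex-valued functions on $\{(x,t)\in\mathbb{R}^2:2x/\varepsilon,2t/\varepsilon,(x+t)/\varepsilon\in\mathbb{Z}\}$ satisfying: (1) for $2x/\varepsilon,2t/\varepsilon$ even, $A_1(x,t)=\frac{1}{\sqrt{1+m^2\varepsilon^2}}(A_1(x+\frac{\varepsilon}{2},t-\frac{\varepsilon}{2})+m\varepsilon A_2(x+\frac{\varepsilon}{2},t-\frac{\varepsilon}{2}))$ and $A_2(x,t)=\frac{1}{\sqrt{1+m^2\varepsilon^2}}(A_2(x-\frac{\varepsilon}{2},t-\frac{\varepsilon}{2})-m\varepsilon A_1(x-\frac{\varepsilon}{2},t-\frac{\varepsilon}{2}))+2\delta_{x0}\delta_{t0}$; (2) for $2x/\varepsilon,2t/\varepsilon$ odd, $A_1(x,t)=\frac{1}{\sqrt{1-\delta^2}}(A_1(x+\frac{\varepsilon}{2},t-\frac{\varepsilon}{2})-i\delta A_2(x+\frac{\varepsilon}{2},t-\frac{\varepsilon}{2}))$ and $A_2(x,t)=\frac{1}{\sqrt{1-\delta^2}}(A_2(x-\frac{\varepsilon}{2},t-\frac{\varepsilon}{2})+i\delta A_1(x-\frac{\varepsilon}{2},t-\frac{\varepsilon}{2}))$; (3) $\sum_{(x,t)\in\varepsilon\mathbb{Z}^2}(|A_1(x,t)|^2+|A_2(x,t)|^2)<\infty$. (Existence and uniqueness of such a pair is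 known.) Here $\delta_{xy}$ is the Kronecker delta. The lattice propagator is $\widetilde{A}_k(x,t,m,\varepsilon):=\lim_{\delta\searrow0}A_k(x,t,m,\varepsilon,\delta)$ for $(x,t)\in\varepsilon\mathbb{Z}^2$ (this limit is known to exist). *)

theory Defs
  imports "HOL-Analysis.Analysis"
begin

definition even_real :: "real \<Rightarrow> bool" where
  "even_real r \<longleftrightarrow> (\<exists>n::int. r = of_int n \<and> even n)"

definition odd_real :: "real \<Rightarrow> bool" where
  "odd_real r \<longleftrightarrow> (\<exists>n::int. r = of_int n \<and> odd n)"

definition lat :: "real \<Rightarrow> (real \<times> real) set" where
  "lat \<epsilon> = {(x, t). 2 * x / \<epsilon> \<in> \<int> \<and> 2 * t / \<epsilon> \<in> \<int> \<and> (x + t) / \<epsilon> \<in> \<int>}"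

text \<open>Conditions (1)-(3) of the definition; functions are taken to vanish off the lattice
  so that "the unique pair of functions on the lattice" is a unique pair of HOL functions.\<close>
definition is_sol ::
  "real \<Rightarrow> real \<Rightarrow> real \<Rightarrow> (real \<Rightarrow> real \<Rightarrow> complex) \<Rightarrow> (real \<Rightarrow> real \<Rightarrow> complex) \<Rightarrow> bool" where
  "is_sol m \<epsilon> \<delta> A1 A2 \<longleftrightarrow>
     (\<forall>x t. (x, t) \<notin> lat \<epsilon> \<longrightarrow> A1 x t = 0 \<and> A2 x t = 0) \<and>
     (\<forall>x t. (x, t) \<in> lat \<epsilon> \<and> even_real (2 * x / \<epsilon>) \<and> even_real (2 * t / \<epsilon>) \<longrightarrow>
        A1 x t = complex_of_real (1 / sqrt (1 + m\<^sup>2 * \<epsilon>\<^sup>2)) *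
                 (A1 (x + \<epsilon>/2) (t - \<epsilon>/2) + complex_of_real (m * \<epsilon>) * A2 (x + \<epsilon>/2) (t - \<epsilon>/2)) \<and>
        A2 x t = complex_of_real (1 / sqrt (1 + m\<^sup>2 * \<epsilon>\<^sup>2)) *
                 (A2 (x - \<epsilon>/2) (t - \<epsilon>/2) - complex_of_real (m * \<epsilon>) * A1 (x - \<epsilon>/2) (t - \<epsilon>/2))
                 + (if x = 0 \<and> t = 0 then 2 else 0)) \<and>
     (\<forall>x t. (x, t) \<in> lat \<epsilon> \<and> odd_real (2 * x / \<epsilon>) \<and> odd_real (2 * t / \<epsilon>) \<longrightarrow>
        A1 x t = complex_of_real (1 / sqrt (1 - \<delta>\<^sup>2)) *
                 (A1 (x + \<epsilon>/2) (t - \<epsilon>/2) - \<i> * complex_of_real \<delta> * A2 (x + \<epsilon>/2) (t - \<epsilon>/2)) \<and>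
        A2 x t = complex_of_real (1 / sqrt (1 - \<delta>\<^sup>2)) *
                 (A2 (x - \<epsilon>/2) (t - \<epsilon>/2) + \<i> * complex_of_real \<delta> * A1 (x - \<epsilon>/2) (t - \<epsilon>/2))) \<and>
     ((\<lambda>(a::int, b::int). (cmod (A1 (\<epsilon> * of_int a) (\<epsilon> * of_int b)))\<^sup>2
                          + (cmod (A2 (\<epsilon> * of_int a) (\<epsilon> * of_int b)))\<^sup>2) summable_on UNIV)"

definition A_sol :: "real \<Rightarrow> real \<Rightarrow> real \<Rightarrow> (real \<Rightarrow> real \<Rightarrow> complex) \<times> (real \<Rightarrow> real \<Rightarrow> complex)" where
  "A_sol m \<epsilon> \<delta> = (THE p. is_sol m \<epsilon> \<delta> (fst p) (snd p))"

definition A1t :: "real \<Rightarrow> real \<Rightarrow> real \<Rightarrow> real \<Rightarrow> complex" where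
  "A1t x t m \<epsilon> = Lim (at_right 0) (\<lambda>\<delta>. fst (A_sol m \<epsilon> \<delta>) x t)"

definition A2t :: "real \<Rightarrow> real \<Rightarrow> real \<Rightarrow> real \<Rightarrow> complex" where
  "A2t x t m \<epsilon> = Lim (at_right 0) (\<lambda>\<delta>. snd (A_sol m \<epsilon> \<delta>) x t)"

definition omega :: "real \<Rightarrow> real \<Rightarrow> real \<Rightarrow> real" where
  "omega m \<epsilon> p = (1 / \<epsilon>) * arccos (cos (p * \<epsilon>) / sqrt (1 + m\<^sup>2 * \<epsilon>\<^sup>2))"

definition sgnA :: "nat \<Rightarrow> real \<Rightarrow> real \<Rightarrow> real \<Rightarrow> complex" where
  "sgnA k x t \<epsilon> = (if t < 0 \<and> even_real ((x + t) / \<epsilon> + real k) then -1 else 1)"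

end

theory Submission
  imports Defs
begin

definition fc :: "(real \<Rightarrow> complex) \<Rightarrow> int \<Rightarrow> complex" where
  "fc g k = integral {-pi..pi} (\<lambda>p. cis (p * of_int k) * g p) / (2 * pi)"

lemma cis_int_pi: "cis (pi * of_int k) = cis (- pi * of_int k)"
  by (simp add: cis.code)

lemma integral_cis_int:
  "((\<lambda>p. cis (p * of_int k)) has_integral (if k = 0 then 2 * pi else 0)) {-pi..pi}"
proof (cases "k = 0")
  case True
  then show ?thesis using has_integral_const_real[of "1::complex" "-pi" pi]
    by (simp add: content_real scaleR_conv_of_real)
next
  case False
  define F where "F p = cis (p * of_int k) / (\<i> * of_int k)" for p
  have d: "(F has_vector_derivative cis (p * of_int k)) (at p within {-pi..pi})" for p
  proof -
    have "((\<lambda>p. cis (p * of_int k)) has_derivative (\<lambda>t. (t * of_int k) *\<^sub>R (\<i> * cis (p * of_int k)))) (at p within {-pi..pi})"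
      by (auto intro!: derivative_eq_intros)
    then have "((\<lambda>p. cis (p * of_int k) / (\<i> * of_int k)) has_derivative (\<lambda>t. ((t * of_int k) *\<^sub>R (\<i> * cis (p * of_int k))) / (\<i> * of_int k))) (at p within {-pi..pi})"
      using False by (intro derivative_eq_intros) auto
    moreover have "(\<lambda>t. ((t * of_int k) *\<^sub>R (\<i> * cis (p * of_int k))) / (\<i> * of_int k)) = (\<lambda>t. t *\<^sub>R cis (p * of_int k))"
      using False by (auto simp: scaleR_conv_of_real field_simps)
    ultimately show ?thesis unfolding has_vector_derivative_def F_def by simp
  qed
  have "((\<lambda>p. cis (p * of_int k)) has_integral (F pi - F (-pi))) {-pi..pi}"
    by (rule fundamental_theorem_of_calculus) (use d in auto)
  moreover have "F pi - F (-pi) = 0"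
    unfolding F_def using cis_int_pi[of k] by (simp add: mult.commute)
  ultimately show ?thesis using False by simp
qed

lemma integral_cis_int': "integral {-pi..pi} (\<lambda>p. cis (p * of_int k)) = (if k = 0 then 2 * pi else 0)"
  using integral_cis_int by (rule integral_unique)

lemma fc_const: "fc (\<lambda>p. c) k = (if k = 0 then c else 0)"
proof -
  have "((\<lambda>p. cis (p * of_int k) * c) has_integral (if k = 0 then 2 * pi else 0) * c) {-pi..pi}"
    using has_integral_mult_left[OF integral_cis_int] by simp
  then show ?thesis unfolding fc_def by (auto dest!: integral_unique)
qed

lemma fc_shift_plus: "fc (\<lambda>p. cis p * g p) k = fc g (k + 1)"
  unfolding fc_def by (simp add: mult.assoc[symmetric] cis_mult distrib_left)

lemma fc_shift_minus: "fc (\<lambda>p. cis (- p) * g p) k = fc g (k - 1)"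
  unfolding fc_def by (simp add: mult.assoc[symmetric] cis_mult right_diff_distrib)

lemma integrable_cis_mult:
  assumes "continuous_on {-pi..pi} g"
  shows "(\<lambda>p. cis (p * of_int k) * g p) integrable_on {-pi..pi}"
  by (rule integrable_continuous_interval) (intro continuous_intros assms)

lemma fc_add:
  assumes "continuous_on {-pi..pi} g" "continuous_on {-pi..pi} h"
  shows "fc (\<lambda>p. g p + h p) k = fc g k + fc h k"
proof -
  have "integral {-pi..pi} (\<lambda>p. cis (p * of_int k) * (g p + h p)) =
        integral {-pi..pi} (\<lambda>p. cis (p * of_int k) * g p) + integral {-pi..pi} (\<lambda>p. cis (p * of_int k) * h p)"
    using integral_add[OF integrable_cis_mult[OF assms(1)] integrable_cis_mult[OF assms(2)]]
    by (simp add: distrib_left)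
  then show ?thesis unfolding fc_def by (simp add: add_divide_distrib)
qed

lemma fc_cmult: "fc (\<lambda>p. c * g p) k = c * fc g k"
  unfolding fc_def by (simp add: mult.left_commute)

lemma cnj_mult_self: "cnj z * z = (complex_of_real (cmod z))\<^sup>2"
  using complex_norm_square[of z] by (simp add: mult.commute)

lemma mult_cnj_self: "z * cnj z = (complex_of_real (cmod z))\<^sup>2"
  using complex_norm_square[of z] by simp

lemma integral_sum_cont:
  fixes f :: "'a \<Rightarrow> real \<Rightarrow> complex"
  assumes "finite F" "\<And>k. k \<in> F \<Longrightarrow> continuous_on {-pi..pi} (f k)"
  shows "integral {-pi..pi} (\<lambda>p. \<Sum>k\<in>F. f k p) = (\<Sum>k\<in>F. integral {-pi..pi} (f k))"
  using assms by (intro integral_sum) (auto intro: integrable_continuous_interval)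

lemma bessel:
  fixes g :: "real \<Rightarrow> complex"
  assumes cont: "continuous_on {-pi..pi} g" and bnd: "\<And>p. p \<in> {-pi..pi} \<Longrightarrow> norm (g p) \<le> M"
    and fin: "finite F"
  shows "(\<Sum>k\<in>F. (cmod (fc g k))\<^sup>2) \<le> M\<^sup>2"
proof -
  define c where "c k = fc g k" for k
  define h where "h p = (\<Sum>k\<in>F. c k * cis (- (p * of_int k)))" for p
  define S where "S = (\<Sum>k\<in>F. (cmod (c k))\<^sup>2)"
  have ch: "continuous_on {-pi..pi} h" unfolding h_def by (intro continuous_intros)
  have ig: "integral {-pi..pi} (\<lambda>p. cis (p * of_int k) * g p) = 2 * pi * c k" for k
    unfolding c_def fc_def by simp
  have I1: "integral {-pi..pi} (\<lambda>p. g p * cnj (h p)) = 2 * pi * S"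
  proof -
    have "integral {-pi..pi} (\<lambda>p. g p * cnj (h p)) =
          integral {-pi..pi} (\<lambda>p. \<Sum>k\<in>F. cnj (c k) * (cis (p * of_int k) * g p))"
      unfolding h_def by (simp add: sum_distrib_left sum_distrib_right cis_cnj mult_ac)
    also have "\<dots> = (\<Sum>k\<in>F. cnj (c k) * integral {-pi..pi} (\<lambda>p. cis (p * of_int k) * g p))"
      by (subst integral_sum_cont[OF fin]) (auto intro!: continuous_intros cont)
    also have "\<dots> = 2 * pi * S"
      unfolding ig S_def of_real_sum sum_distrib_left
      by (intro sum.cong refl) (simp add: cnj_mult_self)
    finally show ?thesis .
  qed
  have I1': "integral {-pi..pi} (\<lambda>p. h p * cnj (g p)) = 2 * pi * S"
  proof -
    have "integral {-pi..pi} (\<lambda>p. h p * cnj (g p)) = cnj (integral {-pi..pi} (\<lambda>p. g p * cnj (h p)))"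
      by (simp add: integral_cnj mult.commute)
    then show ?thesis using I1 by (simp add: S_def)
  qed
  have I2: "integral {-pi..pi} (\<lambda>p. h p * cnj (h p)) = 2 * pi * S"
  proof -
    have "integral {-pi..pi} (\<lambda>p. h p * cnj (h p)) =
          integral {-pi..pi} (\<lambda>p. \<Sum>l\<in>F. \<Sum>k\<in>F. c k * cnj (c l) * cis (p * of_int (l - k)))"
      unfolding h_def
      by (simp add: sum_distrib_left sum_distrib_right cis_cnj mult_ac cis_mult algebra_simps)
    also have "\<dots> = (\<Sum>l\<in>F. \<Sum>k\<in>F. c k * cnj (c l) * integral {-pi..pi} (\<lambda>p. cis (p * of_int (l - k))))"
      by (subst integral_sum_cont[OF fin], force intro!: continuous_intros,
          subst integral_sum_cont[OF fin], auto intro!: continuous_intros)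
    also have "\<dots> = (\<Sum>l\<in>F. \<Sum>k\<in>F. if l = k then 2 * pi * (c k * cnj (c k)) else 0)"
      unfolding integral_cis_int' by (intro sum.cong refl) auto
    also have "\<dots> = 2 * pi * S"
      using fin by (simp add: S_def sum_distrib_left) (intro sum.cong refl, simp add: mult_cnj_self)
    finally show ?thesis .
  qed
  have I0: "integral {-pi..pi} (\<lambda>p. (g p - h p) * cnj (g p - h p)) =
      integral {-pi..pi} (\<lambda>p. g p * cnj (g p)) - integral {-pi..pi} (\<lambda>p. g p * cnj (h p))
      - integral {-pi..pi} (\<lambda>p. h p * cnj (g p)) + integral {-pi..pi} (\<lambda>p. h p * cnj (h p))"
  proof -
    have i: "(\<lambda>p. u p * cnj (v p)) integrable_on {-pi..pi}" if "continuous_on {-pi..pi} u" "continuous_on {-pi..pi} v" for u v :: "real \<Rightarrow> complex"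
      by (rule integrable_continuous_interval) (intro continuous_intros that)
    have "(\<lambda>p. (g p - h p) * cnj (g p - h p)) = (\<lambda>p. g p * cnj (g p) - g p * cnj (h p) - h p * cnj (g p) + h p * cnj (h p))"
      by (auto simp: algebra_simps)
    then show ?thesis
      by (simp add: integral_add integral_diff integrable_add integrable_diff i cont ch)
  qed
  have nsq: "(\<lambda>p. u p * cnj (u p)) = (\<lambda>p. complex_of_real ((cmod (u p))\<^sup>2))" for u :: "real \<Rightarrow> complex"
    by (simp add: mult_cnj_self)
  have intof: "integral {-pi..pi} (\<lambda>p. complex_of_real (f p)) = complex_of_real (integral {-pi..pi} f)"
    if "continuous_on {-pi..pi} f" for f
    using has_integral_of_real[OF integrable_integral[OF integrable_continuous_interval[OF that]]]
    by (rule integral_unique)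
  define Q where "Q = integral {-pi..pi} (\<lambda>p. (cmod (g p - h p))\<^sup>2)"
  define G where "G = integral {-pi..pi} (\<lambda>p. (cmod (g p))\<^sup>2)"
  have Qnn: "Q \<ge> 0" unfolding Q_def
    by (rule integral_nonneg) (auto intro!: integrable_continuous_interval continuous_intros cont ch)
  have GM: "G \<le> integral {-pi..pi} (\<lambda>p. M\<^sup>2)" unfolding G_def
    by (rule integral_le) (auto intro!: integrable_continuous_interval continuous_intros cont bnd power_mono)
  have "complex_of_real Q = complex_of_real G - complex_of_real (2 * pi * S)"
    using I0 I1 I1' I2 unfolding nsq Q_def G_def
    by (subst (asm) (1 2) intof, (intro continuous_intros cont ch)+) simp
  then have "Q = G - 2 * pi * S" by (metis of_real_diff of_real_eq_iff)
  moreover have "G \<le> 2 * pi * M\<^sup>2" using GM by (simp add: content_real)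
  ultimately have "2 * pi * S \<le> 2 * pi * M\<^sup>2" using Qnn by linarith
  then have "S \<le> M\<^sup>2" using pi_gt_zero by simp
  then show ?thesis unfolding S_def c_def by simp
qed


definition sq :: "complex \<Rightarrow> complex" where
  "sq w = (1 + \<i>) / complex_of_real (sqrt 2) * csqrt (- \<i> * w)"

definition ffun :: "complex \<Rightarrow> complex" where
  "ffun \<tau> = sq (\<tau> - 2) * sq (\<tau> + 2)"

definition lsf :: "complex \<Rightarrow> complex" where
  "lsf \<tau> = (\<tau> - ffun \<tau>) / 2"

definition luf :: "complex \<Rightarrow> complex" where
  "luf \<tau> = (\<tau> + ffun \<tau>) / 2"

lemma omega8_sq: "((1 + \<i>) / complex_of_real (sqrt 2))\<^sup>2 = \<i>"
proof -
  have "(complex_of_real (sqrt 2))\<^sup>2 = 2"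
    by (simp flip: of_real_power)
  then show ?thesis by (simp add: power_divide power2_eq_square algebra_simps)
qed

lemma sq_sq: "(sq w)\<^sup>2 = w"
  unfolding sq_def power_mult_distrib omega8_sq by simp

lemma ffun_sq: "(ffun \<tau>)\<^sup>2 = \<tau>\<^sup>2 - 4"
  unfolding ffun_def power_mult_distrib sq_sq by (simp add: algebra_simps power2_eq_square)

lemma ls_lu: "lsf \<tau> * luf \<tau> = 1"
proof -
  have "lsf \<tau> * luf \<tau> = (\<tau>\<^sup>2 - (ffun \<tau>)\<^sup>2) / 4"
    unfolding lsf_def luf_def by (simp add: power2_eq_square algebra_simps)
  then show ?thesis by (simp add: ffun_sq)
qed

lemma ls_plus_lu: "lsf \<tau> + luf \<tau> = \<tau>"
  unfolding lsf_def luf_def by (simp add: field_simps)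

lemma lu_minus_ls: "luf \<tau> - lsf \<tau> = ffun \<tau>"
  unfolding lsf_def luf_def by (simp add: field_simps)

lemma sq_pos:
  assumes "Im w > 0"
  shows "Re (sq w) > 0 \<and> Im (sq w) > 0"
proof -
  define s where "s = csqrt (- \<i> * w)"
  have s2: "s\<^sup>2 = - \<i> * w" unfolding s_def by simp
  have "Re (s\<^sup>2) = (Re s)\<^sup>2 - (Im s)\<^sup>2" by (simp add: power2_eq_square)
  then have "(Re s)\<^sup>2 - (Im s)\<^sup>2 = Im w" using s2 by simp
  then have p: "(Re s - Im s) * (Re s + Im s) > 0" using assms by (simp add: power2_eq_square algebra_simps)
  have r: "Re s \<ge> 0" unfolding s_def by (rule Re_csqrt)
  have "Re s - Im s > 0 \<and> Re s + Im s > 0"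
  proof (rule ccontr)
    assume "\<not> ?thesis"
    then have "Re s - Im s \<le> 0 \<or> Re s + Im s \<le> 0" by linarith
    then show False
    proof
      assume h: "Re s - Im s \<le> 0"
      then have "Re s + Im s < 0" using p by (smt (verit) mult_nonpos_nonneg)
      then show False using h r by linarith
    next
      assume h: "Re s + Im s \<le> 0"
      then have "Re s - Im s < 0" using p by (smt (verit) mult_nonneg_nonpos)
      then show False using h r by linarith
    qed
  qed
  moreover have "sq w = complex_of_real (1 / sqrt 2) * Complex (Re s - Im s) (Re s + Im s)"
    unfolding sq_def s_def[symmetric] by (simp add: complex_eq_iff)
  ultimately show ?thesis by simp
qed

lemma aux_lt: "(0::real) < a \<Longrightarrow> 0 < b \<Longrightarrow> (P::real) = Q + 4 * (a + b) \<Longrightarrow> Q < P"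
  by simp

lemma ls_lt1:
  assumes "Im \<tau> > 0"
  shows "cmod (lsf \<tau>) < 1"
proof -
  define A where "A = sq (\<tau> - 2)"
  define B where "B = sq (\<tau> + 2)"
  have pA: "Re A > 0 \<and> Im A > 0" unfolding A_def by (rule sq_pos) (use assms in simp)
  have pB: "Re B > 0 \<and> Im B > 0" unfolding B_def by (rule sq_pos) (use assms in simp)
  have A2: "A\<^sup>2 = \<tau> - 2" unfolding A_def by (rule sq_sq)
  have B2: "B\<^sup>2 = \<tau> + 2" unfolding B_def by (rule sq_sq)
  have t: "\<tau> = (A\<^sup>2 + B\<^sup>2) / 2" using A2 B2 by (simp add: field_simps)
  have f: "ffun \<tau> = A * B" by (simp add: ffun_def A_def B_def)
  have ls: "lsf \<tau> = (A - B)\<^sup>2 / 4"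
  proof -
    have "lsf \<tau> = (\<tau> - A * B) / 2" by (simp add: lsf_def f)
    also have "\<dots> = (A - B)\<^sup>2 / 4" by (subst t) (simp add: field_simps power2_eq_square)
    finally show ?thesis .
  qed
  have lu: "luf \<tau> = (A + B)\<^sup>2 / 4"
  proof -
    have "luf \<tau> = (\<tau> + A * B) / 2" by (simp add: luf_def f)
    also have "\<dots> = (A + B)\<^sup>2 / 4" by (subst t) (simp add: field_simps power2_eq_square)
    finally show ?thesis .
  qed
  have "(cmod (A - B))\<^sup>2 < (cmod (A + B))\<^sup>2"
  proof -
    have e1: "(cmod (A - B))\<^sup>2 = (Re A - Re B)\<^sup>2 + (Im A - Im B)\<^sup>2" by (simp add: cmod_power2)
    have e2: "(cmod (A + B))\<^sup>2 = (Re A + Re B)\<^sup>2 + (Im A + Im B)\<^sup>2" by (simp add: cmod_power2)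
    have "0 < Re A * Re B" "0 < Im A * Im B" using pA pB by auto
      moreover have "(Re A + Re B)\<^sup>2 + (Im A + Im B)\<^sup>2 = (Re A - Re B)\<^sup>2 + (Im A - Im B)\<^sup>2 + 4 * (Re A * Re B + Im A * Im B)"
        by (simp add: power2_eq_square algebra_simps)
      ultimately show ?thesis unfolding e1 e2 by (rule aux_lt)
  qed
  then have lt: "cmod (lsf \<tau>) < cmod (luf \<tau>)"
    unfolding ls lu by (simp add: norm_divide norm_power)
  have "cmod (lsf \<tau>) * cmod (luf \<tau>) = 1" using ls_lu[of \<tau>] by (metis norm_mult norm_one)
  then have one: "cmod (lsf \<tau>) * cmod (luf \<tau>) = 1" .
  show ?thesis
  proof (cases "cmod (lsf \<tau>) = 0")
    case False
    then have "cmod (lsf \<tau>) * cmod (lsf \<tau>) < cmod (lsf \<tau>) * cmod (luf \<tau>)"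
      using lt by (intro mult_strict_left_mono) auto
    then have "(cmod (lsf \<tau>))\<^sup>2 < 1\<^sup>2" using one by (simp add: power2_eq_square)
    then show ?thesis by (rule power2_less_imp_less) simp
  qed simp
qed

lemma not_nonpos_Reals:
  assumes "Im w \<ge> 0" "w \<noteq> 0"
  shows "- \<i> * w \<notin> \<real>\<^sub>\<le>\<^sub>0"
  using assms by (auto simp: complex_nonpos_Reals_iff complex_eq_iff)

lemma continuous_on_sq:
  assumes "continuous_on S g" "\<And>x. x \<in> S \<Longrightarrow> Im (g x) \<ge> 0 \<and> g x \<noteq> 0"
  shows "continuous_on S (\<lambda>x. sq (g x))"
proof -
  have "continuous_on S (\<lambda>x. csqrt (- \<i> * g x))"
    by (rule continuous_on_compose2[OF continuous_on_csqrt, where f="\<lambda>x. - \<i> * g x"])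
       (use assms not_nonpos_Reals in \<open>auto intro!: continuous_intros\<close>)
  then show ?thesis unfolding sq_def by (intro continuous_intros)
qed

lemma continuous_on_ffun:
  assumes "continuous_on S g" "\<And>x. x \<in> S \<Longrightarrow> Im (g x) \<ge> 0 \<and> g x \<noteq> 2 \<and> g x \<noteq> -2"
  shows "continuous_on S (\<lambda>x. ffun (g x))"
proof -
  have "continuous_on S (\<lambda>x. sq (g x - 2))"
    by (rule continuous_on_sq) (use assms in \<open>auto intro!: continuous_intros\<close>)
  moreover have "continuous_on S (\<lambda>x. sq (g x + 2))"
    by (rule continuous_on_sq) (use assms in \<open>auto intro!: continuous_intros simp: add_eq_0_iff equation_minus_iff minus_equation_iff\<close>)
  ultimately show ?thesis unfolding ffun_def by (intro continuous_intros)
qed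

lemma ffun_real:
  assumes "-2 < r" "r < 2"
  shows "ffun (complex_of_real r) = \<i> * complex_of_real (sqrt (4 - r\<^sup>2))"
proof -
  define w8 where "w8 = (1 + \<i>) / complex_of_real (sqrt 2)"
  have s2: "(complex_of_real (sqrt 2))\<^sup>2 = 2" by (simp flip: of_real_power)
  have w2: "w8\<^sup>2 = \<i>" using omega8_sq unfolding w8_def .
  have cw2: "(cnj w8)\<^sup>2 = - \<i>" using arg_cong[OF w2, of cnj] by (simp flip: complex_cnj_power)
  have r1: "(complex_of_real (sqrt (2 - r)))\<^sup>2 = complex_of_real (2 - r)" using assms by (simp flip: of_real_power)
  have r2: "(complex_of_real (sqrt (2 + r)))\<^sup>2 = complex_of_real (2 + r)" using assms by (simp flip: of_real_power)
  have c1: "csqrt (- \<i> * (complex_of_real r - 2)) = complex_of_real (sqrt (2 - r)) * w8"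
  proof (rule csqrt_unique)
    show "(complex_of_real (sqrt (2 - r)) * w8)\<^sup>2 = - \<i> * (complex_of_real r - 2)"
      unfolding power_mult_distrib w2 r1 by (simp add: algebra_simps)
    show "0 < Re (complex_of_real (sqrt (2 - r)) * w8) \<or> Re (complex_of_real (sqrt (2 - r)) * w8) = 0 \<and> 0 \<le> Im (complex_of_real (sqrt (2 - r)) * w8)"
      using assms unfolding w8_def by simp
  qed
  have c2: "csqrt (- \<i> * (complex_of_real r + 2)) = complex_of_real (sqrt (2 + r)) * cnj w8"
  proof (rule csqrt_unique)
    show "(complex_of_real (sqrt (2 + r)) * cnj w8)\<^sup>2 = - \<i> * (complex_of_real r + 2)"
      unfolding power_mult_distrib cw2 r2 by (simp add: algebra_simps)
    show "0 < Re (complex_of_real (sqrt (2 + r)) * cnj w8) \<or> Re (complex_of_real (sqrt (2 + r)) * cnj w8) = 0 \<and> 0 \<le> Im (complex_of_real (sqrt (2 + r)) * cnj w8)"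
      using assms unfolding w8_def by simp
  qed
  have ww: "w8 * w8 = \<i>" using omega8_sq unfolding w8_def by (simp add: power2_eq_square)
  have wc: "w8 * cnj w8 = 1" unfolding w8_def by (simp add: s2 power2_eq_square complex_eq_iff)
  have "ffun (complex_of_real r) = (w8 * w8) * (w8 * cnj w8) * complex_of_real (sqrt (2 - r) * sqrt (2 + r))"
    unfolding ffun_def sq_def w8_def[symmetric] c1 c2 by (simp add: mult_ac)
  also have "sqrt (2 - r) * sqrt (2 + r) = sqrt (4 - r\<^sup>2)"
    by (simp add: real_sqrt_mult[symmetric] power2_eq_square algebra_simps)
  finally show ?thesis using ww wc by simp
qed


definition Ps1 :: "complex \<Rightarrow> complex \<Rightarrow> complex \<Rightarrow> complex \<Rightarrow> complex \<Rightarrow> complex \<Rightarrow> complex" where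
  "Ps1 w11 w12 w21 w22 e1 e2 = ((luf (w11 + w22) - w11) * e1 - w12 * e2) / ffun (w11 + w22)"
definition Ps2 :: "complex \<Rightarrow> complex \<Rightarrow> complex \<Rightarrow> complex \<Rightarrow> complex \<Rightarrow> complex \<Rightarrow> complex" where
  "Ps2 w11 w12 w21 w22 e1 e2 = (- w21 * e1 + (luf (w11 + w22) - w22) * e2) / ffun (w11 + w22)"
definition Pu1 :: "complex \<Rightarrow> complex \<Rightarrow> complex \<Rightarrow> complex \<Rightarrow> complex \<Rightarrow> complex \<Rightarrow> complex" where
  "Pu1 w11 w12 w21 w22 e1 e2 = ((w11 - lsf (w11 + w22)) * e1 + w12 * e2) / ffun (w11 + w22)"
definition Pu2 :: "complex \<Rightarrow> complex \<Rightarrow> complex \<Rightarrow> complex \<Rightarrow> complex \<Rightarrow> complex \<Rightarrow> complex" where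
  "Pu2 w11 w12 w21 w22 e1 e2 = (w21 * e1 + (w22 - lsf (w11 + w22)) * e2) / ffun (w11 + w22)"

definition G1 :: "complex \<Rightarrow> complex \<Rightarrow> complex \<Rightarrow> complex \<Rightarrow> complex \<Rightarrow> complex \<Rightarrow> int \<Rightarrow> complex" where
  "G1 w11 w12 w21 w22 e1 e2 t = (if 0 \<le> t then lsf (w11 + w22) ^ nat t * Ps1 w11 w12 w21 w22 e1 e2
     else - (lsf (w11 + w22) ^ nat (- t)) * Pu1 w11 w12 w21 w22 e1 e2)"
definition G2 :: "complex \<Rightarrow> complex \<Rightarrow> complex \<Rightarrow> complex \<Rightarrow> complex \<Rightarrow> complex \<Rightarrow> int \<Rightarrow> complex" where
  "G2 w11 w12 w21 w22 e1 e2 t = (if 0 \<le> t then lsf (w11 + w22) ^ nat t * Ps2 w11 w12 w21 w22 e1 e2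
     else - (lsf (w11 + w22) ^ nat (- t)) * Pu2 w11 w12 w21 w22 e1 e2)"

lemma green_eigs:
  assumes det: "w11 * w22 - w12 * w21 = 1" and f: "ffun (w11 + w22) \<noteq> 0"
  defines "ls \<equiv> lsf (w11 + w22)" and "lu \<equiv> luf (w11 + w22)"
  shows "ls * Ps1 w11 w12 w21 w22 e1 e2 = w11 * Ps1 w11 w12 w21 w22 e1 e2 + w12 * Ps2 w11 w12 w21 w22 e1 e2"
    and "ls * Ps2 w11 w12 w21 w22 e1 e2 = w21 * Ps1 w11 w12 w21 w22 e1 e2 + w22 * Ps2 w11 w12 w21 w22 e1 e2"
    and "lu * Pu1 w11 w12 w21 w22 e1 e2 = w11 * Pu1 w11 w12 w21 w22 e1 e2 + w12 * Pu2 w11 w12 w21 w22 e1 e2"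
    and "lu * Pu2 w11 w12 w21 w22 e1 e2 = w21 * Pu1 w11 w12 w21 w22 e1 e2 + w22 * Pu2 w11 w12 w21 w22 e1 e2"
    and "Ps1 w11 w12 w21 w22 e1 e2 + Pu1 w11 w12 w21 w22 e1 e2 = e1"
    and "Ps2 w11 w12 w21 w22 e1 e2 + Pu2 w11 w12 w21 w22 e1 e2 = e2"
proof -
  have s: "ls + lu = w11 + w22" unfolding ls_def lu_def by (rule ls_plus_lu)
  have p: "ls * lu = 1" unfolding ls_def lu_def by (rule ls_lu)
  have d: "lu - ls = ffun (w11 + w22)" unfolding ls_def lu_def by (rule lu_minus_ls)
  have lu': "lu = w11 + w22 - ls" using s by (simp add: algebra_simps)
  have q: "ls * ls = (w11 + w22) * ls - 1" using p unfolding lu' by (simp add: algebra_simps)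
  have q2: "lu * lu = (w11 + w22) * lu - 1" using p s
    by (metis (no_types, lifting) add_diff_cancel_left' diff_add_cancel left_diff_distrib' mult.commute)
  define F where "F = ffun (w11 + w22)"
  have F0: "F \<noteq> 0" using f unfolding F_def .
  show "ls * Ps1 w11 w12 w21 w22 e1 e2 = w11 * Ps1 w11 w12 w21 w22 e1 e2 + w12 * Ps2 w11 w12 w21 w22 e1 e2"
    unfolding Ps1_def Ps2_def lu_def[symmetric] F_def[symmetric] using F0
    by (simp add: field_simps, unfold lu') (use q det in algebra)
  show "ls * Ps2 w11 w12 w21 w22 e1 e2 = w21 * Ps1 w11 w12 w21 w22 e1 e2 + w22 * Ps2 w11 w12 w21 w22 e1 e2"
    unfolding Ps1_def Ps2_def lu_def[symmetric] F_def[symmetric] using F0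
    by (simp add: field_simps, unfold lu') (use q det in algebra)
  show "lu * Pu1 w11 w12 w21 w22 e1 e2 = w11 * Pu1 w11 w12 w21 w22 e1 e2 + w12 * Pu2 w11 w12 w21 w22 e1 e2"
    unfolding Pu1_def Pu2_def ls_def[symmetric] F_def[symmetric] using F0
    by (simp add: field_simps, unfold lu') (use q det in algebra)
  show "lu * Pu2 w11 w12 w21 w22 e1 e2 = w21 * Pu1 w11 w12 w21 w22 e1 e2 + w22 * Pu2 w11 w12 w21 w22 e1 e2"
    unfolding Pu1_def Pu2_def ls_def[symmetric] F_def[symmetric] using F0
    by (simp add: field_simps, unfold lu') (use q det in algebra)
  show "Ps1 w11 w12 w21 w22 e1 e2 + Pu1 w11 w12 w21 w22 e1 e2 = e1"
    unfolding Ps1_def Pu1_def lu_def[symmetric] ls_def[symmetric] F_def[symmetric] using F0 d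
    by (simp add: field_simps F_def)
  show "Ps2 w11 w12 w21 w22 e1 e2 + Pu2 w11 w12 w21 w22 e1 e2 = e2"
    unfolding Ps2_def Pu2_def lu_def[symmetric] ls_def[symmetric] F_def[symmetric] using F0 d
    by (simp add: field_simps F_def)
qed

lemma green_rec:
  assumes det: "w11 * w22 - w12 * w21 = 1" and f: "ffun (w11 + w22) \<noteq> 0"
  shows "G1 w11 w12 w21 w22 e1 e2 (t + 1) = w11 * G1 w11 w12 w21 w22 e1 e2 t + w12 * G2 w11 w12 w21 w22 e1 e2 t + (if t = -1 then e1 else 0)"
    and "G2 w11 w12 w21 w22 e1 e2 (t + 1) = w21 * G1 w11 w12 w21 w22 e1 e2 t + w22 * G2 w11 w12 w21 w22 e1 e2 t + (if t = -1 then e2 else 0)"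
proof -
  define ls where "ls = lsf (w11 + w22)"
  define lu where "lu = luf (w11 + w22)"
  note E = green_eigs[OF det f, folded ls_def lu_def, of e1 e2]
  have p: "ls * lu = 1" unfolding ls_def lu_def by (rule ls_lu)
  let ?a1 = "Ps1 w11 w12 w21 w22 e1 e2" and ?a2 = "Ps2 w11 w12 w21 w22 e1 e2"
  let ?b1 = "Pu1 w11 w12 w21 w22 e1 e2" and ?b2 = "Pu2 w11 w12 w21 w22 e1 e2"
  have "G1 w11 w12 w21 w22 e1 e2 (t + 1) = w11 * G1 w11 w12 w21 w22 e1 e2 t + w12 * G2 w11 w12 w21 w22 e1 e2 t + (if t = -1 then e1 else 0)
      \<and> G2 w11 w12 w21 w22 e1 e2 (t + 1) = w21 * G1 w11 w12 w21 w22 e1 e2 t + w22 * G2 w11 w12 w21 w22 e1 e2 t + (if t = -1 then e2 else 0)"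
  proof (cases "0 \<le> t")
    case True
    then have n: "nat (t + 1) = Suc (nat t)" by simp
    have "ls ^ nat (t + 1) * ?a1 = w11 * (ls ^ nat t * ?a1) + w12 * (ls ^ nat t * ?a2)"
      "ls ^ nat (t + 1) * ?a2 = w21 * (ls ^ nat t * ?a1) + w22 * (ls ^ nat t * ?a2)"
    proof -
      have "ls ^ nat (t + 1) * ?a1 = ls ^ nat t * (ls * ?a1)" "ls ^ nat (t + 1) * ?a2 = ls ^ nat t * (ls * ?a2)"
        unfolding n by (simp_all add: mult_ac)
      then show "ls ^ nat (t + 1) * ?a1 = w11 * (ls ^ nat t * ?a1) + w12 * (ls ^ nat t * ?a2)"
        "ls ^ nat (t + 1) * ?a2 = w21 * (ls ^ nat t * ?a1) + w22 * (ls ^ nat t * ?a2)"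
        unfolding E(1,2) by (simp_all add: algebra_simps)
    qed
    then show ?thesis using True unfolding G1_def G2_def ls_def by simp
  next
    case False
    show ?thesis
    proof (cases "t = -1")
      case True
      have x1: "w11 * (- (ls * ?b1)) + w12 * (- (ls * ?b2)) = - (ls * (lu * ?b1))"
        unfolding E(3) by (simp add: algebra_simps)
      have x2: "w21 * (- (ls * ?b1)) + w22 * (- (ls * ?b2)) = - (ls * (lu * ?b2))"
        unfolding E(4) by (simp add: algebra_simps)
      have "?a1 = w11 * (- (ls * ?b1)) + w12 * (- (ls * ?b2)) + e1"
        unfolding x1 mult.assoc[symmetric] p using E(5) by (simp add: eq_diff_eq[symmetric])
      moreover have "?a2 = w21 * (- (ls * ?b1)) + w22 * (- (ls * ?b2)) + e2"
        unfolding x2 mult.assoc[symmetric] p using E(6) by (simp add: eq_diff_eq[symmetric])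
      ultimately show ?thesis using True unfolding G1_def G2_def ls_def by simp
    next
      case False2: False
      then have n: "nat (- t) = Suc (nat (- (t + 1)))" using False by simp
      have "- (ls ^ nat (- (t + 1)) * ?b1) = w11 * (- (ls ^ nat (- t) * ?b1)) + w12 * (- (ls ^ nat (- t) * ?b2))"
        "- (ls ^ nat (- (t + 1)) * ?b2) = w21 * (- (ls ^ nat (- t) * ?b1)) + w22 * (- (ls ^ nat (- t) * ?b2))"
      proof -
        have "w11 * (ls ^ nat (- t) * ?b1) + w12 * (ls ^ nat (- t) * ?b2) = ls ^ nat (- (t + 1)) * (ls * (lu * ?b1))"
          unfolding n power_Suc E(3) by (simp add: algebra_simps)
        also have "\<dots> = ls ^ nat (- (t + 1)) * ?b1" using p by (simp add: mult.assoc[symmetric])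
        finally have h1: "w11 * (ls ^ nat (- t) * ?b1) + w12 * (ls ^ nat (- t) * ?b2) = ls ^ nat (- (t + 1)) * ?b1" .
        then show "- (ls ^ nat (- (t + 1)) * ?b1) = w11 * (- (ls ^ nat (- t) * ?b1)) + w12 * (- (ls ^ nat (- t) * ?b2))"
          by (simp only: mult_minus_right minus_add_distrib[symmetric])
        have "w21 * (ls ^ nat (- t) * ?b1) + w22 * (ls ^ nat (- t) * ?b2) = ls ^ nat (- (t + 1)) * (ls * (lu * ?b2))"
          unfolding n power_Suc E(4) by (simp add: algebra_simps)
        also have "\<dots> = ls ^ nat (- (t + 1)) * ?b2" using p by (simp add: mult.assoc[symmetric])
        finally have h2: "w21 * (ls ^ nat (- t) * ?b1) + w22 * (ls ^ nat (- t) * ?b2) = ls ^ nat (- (t + 1)) * ?b2" .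
        then show "- (ls ^ nat (- (t + 1)) * ?b2) = w21 * (- (ls ^ nat (- t) * ?b1)) + w22 * (- (ls ^ nat (- t) * ?b2))"
          by (simp only: mult_minus_right minus_add_distrib[symmetric])
      qed
      moreover have "\<not> 0 \<le> t + 1" using False False2 by simp
      ultimately show ?thesis using False False2 unfolding G1_def G2_def ls_def by simp
    qed
  qed
  then show "G1 w11 w12 w21 w22 e1 e2 (t + 1) = w11 * G1 w11 w12 w21 w22 e1 e2 t + w12 * G2 w11 w12 w21 w22 e1 e2 t + (if t = -1 then e1 else 0)"
    and "G2 w11 w12 w21 w22 e1 e2 (t + 1) = w21 * G1 w11 w12 w21 w22 e1 e2 t + w22 * G2 w11 w12 w21 w22 e1 e2 t + (if t = -1 then e2 else 0)"
    by auto
qed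


definition cA :: "real \<Rightarrow> complex" where "cA \<mu> = complex_of_real (1 / sqrt (1 + \<mu>\<^sup>2))"
definition cB :: "real \<Rightarrow> complex" where "cB \<delta> = complex_of_real (1 / sqrt (1 - \<delta>\<^sup>2))"

definition W11 :: "real \<Rightarrow> real \<Rightarrow> real \<Rightarrow> complex" where
  "W11 \<mu> \<delta> p = cA \<mu> * cB \<delta> * (cis p + \<i> * complex_of_real (\<mu> * \<delta>))"
definition W12 :: "real \<Rightarrow> real \<Rightarrow> real \<Rightarrow> complex" where
  "W12 \<mu> \<delta> p = cA \<mu> * cB \<delta> * (complex_of_real \<mu> - \<i> * complex_of_real \<delta> * cis p)"
definition W21 :: "real \<Rightarrow> real \<Rightarrow> real \<Rightarrow> complex" where
  "W21 \<mu> \<delta> p = cA \<mu> * cB \<delta> * (\<i> * complex_of_real \<delta> * cis (- p) - complex_of_real \<mu>)"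
definition W22 :: "real \<Rightarrow> real \<Rightarrow> real \<Rightarrow> complex" where
  "W22 \<mu> \<delta> p = cA \<mu> * cB \<delta> * (cis (- p) + \<i> * complex_of_real (\<mu> * \<delta>))"

definition tauf :: "real \<Rightarrow> real \<Rightarrow> real \<Rightarrow> complex" where
  "tauf \<mu> \<delta> p = W11 \<mu> \<delta> p + W22 \<mu> \<delta> p"

lemma cis_cis_minus: "cis p * cis (- p) = 1"
  by (simp add: cis_mult)

lemma d_pos: "0 \<le> (\<delta>::real) \<Longrightarrow> \<delta> < 1 \<Longrightarrow> 1 - \<delta>\<^sup>2 > 0"
  using mult_strict_mono[of \<delta> 1 \<delta> 1] by (simp add: power2_eq_square)

definition kap :: "real \<Rightarrow> real \<Rightarrow> real" where
  "kap \<mu> \<delta> = 1 / (sqrt (1 + \<mu>\<^sup>2) * sqrt (1 - \<delta>\<^sup>2))"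

lemma cAcB: "cA \<mu> * cB \<delta> = complex_of_real (kap \<mu> \<delta>)"
  unfolding cA_def cB_def kap_def by simp

lemma kap_sq:
  assumes "0 \<le> \<delta>" "\<delta> < 1"
  shows "(kap \<mu> \<delta>)\<^sup>2 * ((1 + \<mu>\<^sup>2) * (1 - \<delta>\<^sup>2)) = 1"
proof -
  have d: "1 - \<delta>\<^sup>2 > 0" using assms by (rule d_pos)
  have m: "1 + \<mu>\<^sup>2 > 0" by (simp add: add_pos_nonneg)
  show ?thesis unfolding kap_def using d m by (simp add: power_divide power_mult_distrib)
qed

lemma cAcB_sq:
  assumes "0 \<le> \<delta>" "\<delta> < 1"
  shows "(cA \<mu> * cB \<delta>)\<^sup>2 * ((1 + complex_of_real \<mu> ^ 2) * (1 - complex_of_real \<delta> ^ 2)) = 1"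
proof -
  have "complex_of_real ((kap \<mu> \<delta>)\<^sup>2 * ((1 + \<mu>\<^sup>2) * (1 - \<delta>\<^sup>2))) = 1"
    using kap_sq[OF assms] by simp
  then show ?thesis unfolding cAcB by simp
qed

lemma det_aux:
  fixes k cp cm x y :: complex
  assumes "cp * cm = 1"
  shows "(k * (cp + \<i> * (x * y))) * (k * (cm + \<i> * (x * y))) - (k * (x - \<i> * y * cp)) * (k * (\<i> * y * cm - x)) = k^2 * ((1 + x^2) * (1 - y^2))"
proof -
  have "(k * (cp + \<i> * (x * y))) * (k * (cm + \<i> * (x * y))) - (k * (x - \<i> * y * cp)) * (k * (\<i> * y * cm - x)) = k^2 * ((cp * cm) * (1 - y^2) + x^2 - x^2*y^2)"
    by (simp add: algebra_simps power2_eq_square)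
  also have "\<dots> = k^2 * ((1 + x^2) * (1 - y^2))" unfolding assms by (simp add: algebra_simps)
  finally show ?thesis .
qed

lemma det_W:
  assumes "0 \<le> \<delta>" "\<delta> < 1"
  shows "W11 \<mu> \<delta> p * W22 \<mu> \<delta> p - W12 \<mu> \<delta> p * W21 \<mu> \<delta> p = 1"
proof -
  have "W11 \<mu> \<delta> p * W22 \<mu> \<delta> p - W12 \<mu> \<delta> p * W21 \<mu> \<delta> p =
        (cA \<mu> * cB \<delta>)\<^sup>2 * ((1 + complex_of_real \<mu> ^ 2) * (1 - complex_of_real \<delta> ^ 2))"
    unfolding W11_def W12_def W21_def W22_def of_real_mult
    by (rule det_aux[OF cis_cis_minus])
  then show ?thesis using cAcB_sq[OF assms] by simp
qed

lemma tauf_eq: "tauf \<mu> \<delta> p = complex_of_real (2 * kap \<mu> \<delta> * cos p) + \<i> * complex_of_real (2 * kap \<mu> \<delta> * \<mu> * \<delta>)"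
  unfolding tauf_def W11_def W22_def cA_def cB_def kap_def
  by (simp add: complex_eq_iff cis.code add_divide_distrib[symmetric])

lemma kap_pos: assumes "0 \<le> \<delta>" "\<delta> < 1" shows "kap \<mu> \<delta> > 0"
proof -
  have d: "1 - \<delta>\<^sup>2 > 0" using assms by (rule d_pos)
  then show ?thesis unfolding kap_def by (simp add: add_pos_nonneg)
qed

lemma Im_tauf: "Im (tauf \<mu> \<delta> p) = 2 * kap \<mu> \<delta> * \<mu> * \<delta>"
  unfolding tauf_eq by simp

lemma Re_tauf: "Re (tauf \<mu> \<delta> p) = 2 * kap \<mu> \<delta> * cos p"
  unfolding tauf_eq by simp

lemma tauf_props:
  assumes "\<mu> > 0" "0 \<le> \<delta>" "\<delta> < 1"
  shows "Im (tauf \<mu> \<delta> p) \<ge> 0" "tauf \<mu> \<delta> p \<noteq> 2" "tauf \<mu> \<delta> p \<noteq> -2"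
    and "ffun (tauf \<mu> \<delta> p) \<noteq> 0"
    and "\<delta> > 0 \<Longrightarrow> Im (tauf \<mu> \<delta> p) > 0"
proof -
  have k: "kap \<mu> \<delta> > 0" by (rule kap_pos) (use assms in auto)
  show "Im (tauf \<mu> \<delta> p) \<ge> 0" unfolding Im_tauf using k assms by simp
  show pos: "\<delta> > 0 \<Longrightarrow> Im (tauf \<mu> \<delta> p) > 0" unfolding Im_tauf using k assms by simp
  have lt2: "\<bar>Re (tauf \<mu> \<delta> p)\<bar> < 2" if "\<delta> = 0"
  proof -
    have s: "sqrt (1 + \<mu>\<^sup>2) > 1" using assms by simp
    have "1 / sqrt (1 + \<mu>\<^sup>2) < 1" by (rule divide_less_eq_1_pos[THEN iffD2]) (use s in \<open>auto intro: add_pos_nonneg\<close>)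
    then have "kap \<mu> \<delta> < 1" using that unfolding kap_def by simp
    moreover have "\<bar>cos p\<bar> \<le> 1" by simp
    moreover have "kap \<mu> \<delta> * \<bar>cos p\<bar> \<le> kap \<mu> \<delta>"
      using mult_left_mono[of "\<bar>cos p\<bar>" 1 "kap \<mu> \<delta>"] k by simp
    ultimately have "kap \<mu> \<delta> * \<bar>cos p\<bar> < 1" by linarith
    then show ?thesis unfolding Re_tauf using k by (simp add: abs_mult)
  qed
  have ne: "tauf \<mu> \<delta> p \<noteq> 2 \<and> tauf \<mu> \<delta> p \<noteq> -2"
  proof (cases "\<delta> = 0")
    case True
    then show ?thesis using lt2 by auto
  next
    case False
    then have "Im (tauf \<mu> \<delta> p) > 0" using pos assms by simp
    then show ?thesis by auto
  qed
  then show "tauf \<mu> \<delta> p \<noteq> 2" "tauf \<mu> \<delta> p \<noteq> -2" by auto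
  show "ffun (tauf \<mu> \<delta> p) \<noteq> 0"
  proof
    assume "ffun (tauf \<mu> \<delta> p) = 0"
    then have "(tauf \<mu> \<delta> p)\<^sup>2 - 4 = 0" using ffun_sq[of "tauf \<mu> \<delta> p"] by simp
    then have "(tauf \<mu> \<delta> p - 2) * (tauf \<mu> \<delta> p + 2) = 0" by (simp add: algebra_simps power2_eq_square)
    then show False using ne by (auto simp: add_eq_0_iff minus_equation_iff)
  qed
qed


lemma cont_G:
  fixes w11 w12 w21 w22 :: "'a::topological_space \<Rightarrow> complex"
  assumes c: "continuous_on S w11" "continuous_on S w12" "continuous_on S w21" "continuous_on S w22"
    and h: "\<And>z. z \<in> S \<Longrightarrow> Im (w11 z + w22 z) \<ge> 0 \<and> w11 z + w22 z \<noteq> 2 \<and> w11 z + w22 z \<noteq> -2 \<and> ffun (w11 z + w22 z) \<noteq> 0"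
  shows "continuous_on S (\<lambda>z. G1 (w11 z) (w12 z) (w21 z) (w22 z) e1 e2 t)"
    and "continuous_on S (\<lambda>z. G2 (w11 z) (w12 z) (w21 z) (w22 z) e1 e2 t)"
proof -
  have cf: "continuous_on S (\<lambda>z. ffun (w11 z + w22 z))"
    by (rule continuous_on_ffun) (use c h in \<open>auto intro!: continuous_intros\<close>)
  have cs: "continuous_on S (\<lambda>z. lsf (w11 z + w22 z))" unfolding lsf_def
    by (intro continuous_intros c cf) auto
  have cu: "continuous_on S (\<lambda>z. luf (w11 z + w22 z))" unfolding luf_def
    by (intro continuous_intros c cf) auto
  have nz: "\<forall>z\<in>S. ffun (w11 z + w22 z) \<noteq> 0" using h by auto
  show "continuous_on S (\<lambda>z. G1 (w11 z) (w12 z) (w21 z) (w22 z) e1 e2 t)"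
    unfolding G1_def Ps1_def Pu1_def
    by (cases "0 \<le> t") (simp_all, (intro continuous_intros c cf cs cu nz)+)
  show "continuous_on S (\<lambda>z. G2 (w11 z) (w12 z) (w21 z) (w22 z) e1 e2 t)"
    unfolding G2_def Ps2_def Pu2_def
    by (cases "0 \<le> t") (simp_all, (intro continuous_intros c cf cs cu nz)+)
qed

definition SD :: "(real \<times> real) set" where "SD = {z. 0 \<le> fst z \<and> fst z < 1}"

lemma cont_cB: "continuous_on SD (\<lambda>z. cB (fst z))"
  unfolding cB_def SD_def
  by (intro continuous_intros) (auto dest: d_pos)

lemma cont_W:
  "continuous_on SD (\<lambda>z. W11 \<mu> (fst z) (s * snd z))"
  "continuous_on SD (\<lambda>z. W12 \<mu> (fst z) (s * snd z))"
  "continuous_on SD (\<lambda>z. W21 \<mu> (fst z) (s * snd z))"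
  "continuous_on SD (\<lambda>z. W22 \<mu> (fst z) (s * snd z))"
  unfolding W11_def W12_def W21_def W22_def
  by (intro continuous_intros cont_cB)+

definition gF1 :: "real \<Rightarrow> real \<Rightarrow> int \<Rightarrow> real \<Rightarrow> complex" where
  "gF1 \<mu> \<delta> t p = G1 (W11 \<mu> \<delta> p) (W12 \<mu> \<delta> p) (W21 \<mu> \<delta> p) (W22 \<mu> \<delta> p) 0 2 t"
definition gF2 :: "real \<Rightarrow> real \<Rightarrow> int \<Rightarrow> real \<Rightarrow> complex" where
  "gF2 \<mu> \<delta> t p = G2 (W11 \<mu> \<delta> p) (W12 \<mu> \<delta> p) (W21 \<mu> \<delta> p) (W22 \<mu> \<delta> p) 0 2 t"
definition gT1 :: "real \<Rightarrow> complex \<Rightarrow> complex \<Rightarrow> real \<Rightarrow> int \<Rightarrow> real \<Rightarrow> complex" where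
  "gT1 \<mu> e1 e2 \<delta> t p = G1 (W11 \<mu> \<delta> (- p)) (W21 \<mu> \<delta> (- p)) (W12 \<mu> \<delta> (- p)) (W22 \<mu> \<delta> (- p)) e1 e2 t"
definition gT2 :: "real \<Rightarrow> complex \<Rightarrow> complex \<Rightarrow> real \<Rightarrow> int \<Rightarrow> real \<Rightarrow> complex" where
  "gT2 \<mu> e1 e2 \<delta> t p = G2 (W11 \<mu> \<delta> (- p)) (W21 \<mu> \<delta> (- p)) (W12 \<mu> \<delta> (- p)) (W22 \<mu> \<delta> (- p)) e1 e2 t"

lemma tauf_SD:
  assumes "\<mu> > 0" "z \<in> SD"
  shows "Im (W11 \<mu> (fst z) (s * snd z) + W22 \<mu> (fst z) (s * snd z)) \<ge> 0 \<and>
         W11 \<mu> (fst z) (s * snd z) + W22 \<mu> (fst z) (s * snd z) \<noteq> 2 \<and>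
         W11 \<mu> (fst z) (s * snd z) + W22 \<mu> (fst z) (s * snd z) \<noteq> -2 \<and>
         ffun (W11 \<mu> (fst z) (s * snd z) + W22 \<mu> (fst z) (s * snd z)) \<noteq> 0"
  using tauf_props[of \<mu> "fst z" "s * snd z"] assms unfolding SD_def tauf_def by auto

lemma cont_gF:
  assumes "\<mu> > 0"
  shows "continuous_on SD (\<lambda>z. gF1 \<mu> (fst z) t (snd z))" "continuous_on SD (\<lambda>z. gF2 \<mu> (fst z) t (snd z))"
  using cont_G[OF cont_W[of \<mu> 1] tauf_SD[OF assms, of _ 1]]
  unfolding gF1_def gF2_def by simp_all

lemma cont_gT:
  assumes "\<mu> > 0"
  shows "continuous_on SD (\<lambda>z. gT1 \<mu> e1 e2 (fst z) t (snd z))" "continuous_on SD (\<lambda>z. gT2 \<mu> e1 e2 (fst z) t (snd z))"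
  using cont_G[OF cont_W(1)[of \<mu> "-1"] cont_W(3)[of \<mu> "-1"] cont_W(2)[of \<mu> "-1"] cont_W(4)[of \<mu> "-1"] tauf_SD[OF assms, of _ "-1"]]
  unfolding gT1_def gT2_def by simp_all


lemma cont_P:
  fixes w11 w12 w21 w22 :: "'a::topological_space \<Rightarrow> complex"
  assumes c: "continuous_on S w11" "continuous_on S w12" "continuous_on S w21" "continuous_on S w22"
    and h: "\<And>z. z \<in> S \<Longrightarrow> Im (w11 z + w22 z) \<ge> 0 \<and> w11 z + w22 z \<noteq> 2 \<and> w11 z + w22 z \<noteq> -2 \<and> ffun (w11 z + w22 z) \<noteq> 0"
  shows "continuous_on S (\<lambda>z. Ps1 (w11 z) (w12 z) (w21 z) (w22 z) e1 e2)"
    and "continuous_on S (\<lambda>z. Ps2 (w11 z) (w12 z) (w21 z) (w22 z) e1 e2)"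
    and "continuous_on S (\<lambda>z. Pu1 (w11 z) (w12 z) (w21 z) (w22 z) e1 e2)"
    and "continuous_on S (\<lambda>z. Pu2 (w11 z) (w12 z) (w21 z) (w22 z) e1 e2)"
    and "continuous_on S (\<lambda>z. lsf (w11 z + w22 z))"
proof -
  have cf: "continuous_on S (\<lambda>z. ffun (w11 z + w22 z))"
    by (rule continuous_on_ffun) (use c h in \<open>auto intro!: continuous_intros\<close>)
  show cs: "continuous_on S (\<lambda>z. lsf (w11 z + w22 z))" unfolding lsf_def
    by (intro continuous_intros c cf) auto
  have cu: "continuous_on S (\<lambda>z. luf (w11 z + w22 z))" unfolding luf_def
    by (intro continuous_intros c cf) auto
  have nz: "\<forall>z\<in>S. ffun (w11 z + w22 z) \<noteq> 0" using h by auto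
  show "continuous_on S (\<lambda>z. Ps1 (w11 z) (w12 z) (w21 z) (w22 z) e1 e2)"
    "continuous_on S (\<lambda>z. Ps2 (w11 z) (w12 z) (w21 z) (w22 z) e1 e2)"
    "continuous_on S (\<lambda>z. Pu1 (w11 z) (w12 z) (w21 z) (w22 z) e1 e2)"
    "continuous_on S (\<lambda>z. Pu2 (w11 z) (w12 z) (w21 z) (w22 z) e1 e2)"
    unfolding Ps1_def Ps2_def Pu1_def Pu2_def by (intro continuous_intros c cf cs cu nz)+
qed

lemma mm: "0 \<le> (a::real) \<Longrightarrow> a \<le> b \<Longrightarrow> 0 \<le> c \<Longrightarrow> c \<le> d \<Longrightarrow> a * c \<le> d * b"
  by (metis mult.commute mult_mono order_trans)

lemma G_bound:
  fixes w11 w12 w21 w22 :: "real \<Rightarrow> complex"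
  assumes c: "continuous_on {-pi..pi} w11" "continuous_on {-pi..pi} w12" "continuous_on {-pi..pi} w21" "continuous_on {-pi..pi} w22"
    and h: "\<And>z. z \<in> {-pi..pi} \<Longrightarrow> Im (w11 z + w22 z) > 0 \<and> ffun (w11 z + w22 z) \<noteq> 0"
  shows "\<exists>C \<rho>. 0 \<le> \<rho> \<and> \<rho> < 1 \<and> (\<forall>t. \<forall>p\<in>{-pi..pi}.
           cmod (G1 (w11 p) (w12 p) (w21 p) (w22 p) e1 e2 t) \<le> C * \<rho> ^ nat \<bar>t\<bar> \<and>
           cmod (G2 (w11 p) (w12 p) (w21 p) (w22 p) e1 e2 t) \<le> C * \<rho> ^ nat \<bar>t\<bar>)"
proof -
  have h': "\<And>z. z \<in> {-pi..pi} \<Longrightarrow> Im (w11 z + w22 z) \<ge> 0 \<and> w11 z + w22 z \<noteq> 2 \<and> w11 z + w22 z \<noteq> -2 \<and> ffun (w11 z + w22 z) \<noteq> 0"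
    using h by fastforce
  note cp = cont_P[OF c h']
  define r where "r p = cmod (lsf (w11 p + w22 p))" for p
  define M where "M p = cmod (Ps1 (w11 p) (w12 p) (w21 p) (w22 p) e1 e2) + cmod (Ps2 (w11 p) (w12 p) (w21 p) (w22 p) e1 e2)
     + cmod (Pu1 (w11 p) (w12 p) (w21 p) (w22 p) e1 e2) + cmod (Pu2 (w11 p) (w12 p) (w21 p) (w22 p) e1 e2)" for p
  have cr: "continuous_on {-pi..pi} r" unfolding r_def by (intro continuous_intros cp)
  have cM: "continuous_on {-pi..pi} M" unfolding M_def by (intro continuous_intros cp)
  obtain p0 where p0: "p0 \<in> {-pi..pi}" "\<And>y. y \<in> {-pi..pi} \<Longrightarrow> r y \<le> r p0"
    using continuous_attains_sup[OF compact_Icc _ cr] by fastforce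
  obtain p1 where p1: "p1 \<in> {-pi..pi}" "\<And>y. y \<in> {-pi..pi} \<Longrightarrow> M y \<le> M p1"
    using continuous_attains_sup[OF compact_Icc _ cM] by fastforce
  have rl: "r p0 < 1" unfolding r_def using ls_lt1 h[OF p0(1)] by blast
  have r0: "0 \<le> r p0" unfolding r_def by simp
  have bnd: "cmod (G1 (w11 p) (w12 p) (w21 p) (w22 p) e1 e2 t) \<le> M p1 * r p0 ^ nat \<bar>t\<bar> \<and>
           cmod (G2 (w11 p) (w12 p) (w21 p) (w22 p) e1 e2 t) \<le> M p1 * r p0 ^ nat \<bar>t\<bar>" if p: "p \<in> {-pi..pi}" for t p
  proof -
    have rp: "r p ^ nat \<bar>t\<bar> \<le> r p0 ^ nat \<bar>t\<bar>" using p0(2)[OF p] by (intro power_mono) (auto simp: r_def)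
    have Mp: "M p \<le> M p1" using p1(2)[OF p] .
    have "cmod (Ps1 (w11 p) (w12 p) (w21 p) (w22 p) e1 e2) \<le> M p" "cmod (Ps2 (w11 p) (w12 p) (w21 p) (w22 p) e1 e2) \<le> M p"
         "cmod (Pu1 (w11 p) (w12 p) (w21 p) (w22 p) e1 e2) \<le> M p" "cmod (Pu2 (w11 p) (w12 p) (w21 p) (w22 p) e1 e2) \<le> M p"
      unfolding M_def by auto
    then have "cmod (Ps1 (w11 p) (w12 p) (w21 p) (w22 p) e1 e2) \<le> M p1" "cmod (Ps2 (w11 p) (w12 p) (w21 p) (w22 p) e1 e2) \<le> M p1"
         "cmod (Pu1 (w11 p) (w12 p) (w21 p) (w22 p) e1 e2) \<le> M p1" "cmod (Pu2 (w11 p) (w12 p) (w21 p) (w22 p) e1 e2) \<le> M p1"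
      using Mp by linarith+
    moreover have "r p ^ nat \<bar>t\<bar> \<ge> 0" unfolding r_def by simp
    moreover have "M p1 \<ge> 0" unfolding M_def by simp
    ultimately show ?thesis
      unfolding G1_def G2_def using rp
      by (cases "0 \<le> t") (auto simp: norm_mult norm_power r_def[symmetric] intro!: mm)
  qed
  show ?thesis using bnd r0 rl by blast
qed

lemma sum_geom_nat_le:
  assumes "finite N" "0 \<le> (r::real)" "r < 1"
  shows "(\<Sum>n\<in>N. r ^ n) \<le> 1 / (1 - r)"
proof -
  have "(\<Sum>n\<in>N. r ^ n) \<le> (\<Sum>n. r ^ n)"
    by (rule sum_le_suminf) (use assms in \<open>auto intro: summable_geometric\<close>)
  also have "\<dots> = 1 / (1 - r)" using suminf_geometric[of r] assms by simp
  finally show ?thesis .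
qed

lemma sum_geom_int_le:
  assumes "finite T" "0 \<le> (r::real)" "r < 1"
  shows "(\<Sum>t\<in>T. r ^ nat \<bar>t\<bar>) \<le> 2 / (1 - r)"
proof -
  let ?P = "T \<inter> {0..}" and ?N = "T \<inter> {..<0}"
  have T: "T = ?P \<union> ?N" by auto
  have "(\<Sum>t\<in>T. r ^ nat \<bar>t\<bar>) = (\<Sum>t\<in>?P. r ^ nat \<bar>t\<bar>) + (\<Sum>t\<in>?N. r ^ nat \<bar>t\<bar>)"
    by (subst T, rule sum.union_disjoint) (use assms in auto)
  also have "(\<Sum>t\<in>?P. r ^ nat \<bar>t\<bar>) = (\<Sum>n\<in>nat ` ?P. r ^ n)"
    by (subst sum.reindex) (auto simp: inj_on_def intro!: sum.cong)
  also have "(\<Sum>t\<in>?N. r ^ nat \<bar>t\<bar>) = (\<Sum>n\<in>(\<lambda>t. nat (- t)) ` ?N. r ^ n)"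
    by (subst sum.reindex) (auto simp: inj_on_def intro!: sum.cong)
  also have "(\<Sum>n\<in>nat ` ?P. r ^ n) \<le> 1 / (1 - r)" by (rule sum_geom_nat_le) (use assms in auto)
  also have "(\<Sum>n\<in>(\<lambda>t. nat (- t)) ` ?N. r ^ n) \<le> 1 / (1 - r)" by (rule sum_geom_nat_le) (use assms in auto)
  finally show ?thesis by simp
qed

lemma l2_fc:
  fixes g :: "int \<Rightarrow> real \<Rightarrow> complex"
  assumes c: "\<And>t. continuous_on {-pi..pi} (g t)"
    and b: "\<And>t p. p \<in> {-pi..pi} \<Longrightarrow> cmod (g t p) \<le> C * \<rho> ^ nat \<bar>t\<bar>"
    and r: "0 \<le> \<rho>" "\<rho> < 1"
  shows "(\<lambda>(x, t). (cmod (fc (g t) x))\<^sup>2) summable_on UNIV"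
proof (rule nonneg_bdd_above_summable_on)
  show "bdd_above (sum (\<lambda>(x, t). (cmod (fc (g t) x))\<^sup>2) ` {F. F \<subseteq> UNIV \<and> finite F})"
  proof (rule bdd_aboveI2)
    fix F :: "(int \<times> int) set" assume "F \<in> {F. F \<subseteq> UNIV \<and> finite F}"
    then have fF: "finite F" by simp
    define X where "X = fst ` F"
    define T where "T = snd ` F"
    have fX: "finite X" "finite T" using fF unfolding X_def T_def by auto
    have sub: "F \<subseteq> X \<times> T" unfolding X_def T_def by force
    have "sum (\<lambda>(x, t). (cmod (fc (g t) x))\<^sup>2) F \<le> sum (\<lambda>(x, t). (cmod (fc (g t) x))\<^sup>2) (X \<times> T)"
      by (rule sum_mono2) (use fX sub in auto)
    also have "\<dots> = (\<Sum>x\<in>X. \<Sum>t\<in>T. (cmod (fc (g t) x))\<^sup>2)"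
      by (simp add: sum.cartesian_product)
    also have "\<dots> = (\<Sum>t\<in>T. \<Sum>x\<in>X. (cmod (fc (g t) x))\<^sup>2)"
      by (rule sum.swap)
    also have "\<dots> \<le> (\<Sum>t\<in>T. (C * \<rho> ^ nat \<bar>t\<bar>)\<^sup>2)"
      by (intro sum_mono bessel c b fX)
    also have "\<dots> = C\<^sup>2 * (\<Sum>t\<in>T. (\<rho>\<^sup>2) ^ nat \<bar>t\<bar>)"
      by (simp add: sum_distrib_left power_mult_distrib power_mult[symmetric] mult.commute)
    also have "\<dots> \<le> C\<^sup>2 * (2 / (1 - \<rho>\<^sup>2))"
      by (intro mult_left_mono sum_geom_int_le fX) (use r in \<open>auto simp: power_less_one_iff\<close>)
    finally show "sum (\<lambda>(x, t). (cmod (fc (g t) x))\<^sup>2) F \<le> C\<^sup>2 * (2 / (1 - \<rho>\<^sup>2))" .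
  qed
qed (simp add: case_prod_beta)


definition Ev1 :: "real \<Rightarrow> real \<Rightarrow> (int \<Rightarrow> int \<Rightarrow> complex) \<Rightarrow> (int \<Rightarrow> int \<Rightarrow> complex) \<Rightarrow> int \<Rightarrow> int \<Rightarrow> complex" where
  "Ev1 \<mu> \<delta> u1 u2 x t = cA \<mu> * (cB \<delta> * (u1 (x + 1) t - \<i> * complex_of_real \<delta> * u2 (x + 1) t)
      + complex_of_real \<mu> * (cB \<delta> * (u2 x t + \<i> * complex_of_real \<delta> * u1 x t)))"
definition Ev2 :: "real \<Rightarrow> real \<Rightarrow> (int \<Rightarrow> int \<Rightarrow> complex) \<Rightarrow> (int \<Rightarrow> int \<Rightarrow> complex) \<Rightarrow> int \<Rightarrow> int \<Rightarrow> complex" where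
  "Ev2 \<mu> \<delta> u1 u2 x t = cA \<mu> * (cB \<delta> * (u2 (x - 1) t + \<i> * complex_of_real \<delta> * u1 (x - 1) t)
      - complex_of_real \<mu> * (cB \<delta> * (u1 x t - \<i> * complex_of_real \<delta> * u2 x t)))"

definition UT1 :: "real \<Rightarrow> real \<Rightarrow> (int \<Rightarrow> int \<Rightarrow> complex) \<Rightarrow> (int \<Rightarrow> int \<Rightarrow> complex) \<Rightarrow> int \<Rightarrow> int \<Rightarrow> complex" where
  "UT1 \<mu> \<delta> f1 f2 y t = cA \<mu> * cB \<delta> * (f1 (y - 1) t + \<i> * complex_of_real (\<mu> * \<delta>) * f1 y t
      + \<i> * complex_of_real \<delta> * f2 (y + 1) t - complex_of_real \<mu> * f2 y t)"
definition UT2 :: "real \<Rightarrow> real \<Rightarrow> (int \<Rightarrow> int \<Rightarrow> complex) \<Rightarrow> (int \<Rightarrow> int \<Rightarrow> complex) \<Rightarrow> int \<Rightarrow> int \<Rightarrow> complex" where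
  "UT2 \<mu> \<delta> f1 f2 y t = cA \<mu> * cB \<delta> * (- \<i> * complex_of_real \<delta> * f1 (y - 1) t + complex_of_real \<mu> * f1 y t
      + f2 (y + 1) t + \<i> * complex_of_real (\<mu> * \<delta>) * f2 y t)"

lemma fc_lin4_plus:
  assumes "continuous_on {-pi..pi} g1" "continuous_on {-pi..pi} g2"
  shows "fc (\<lambda>p. a * (cis p * g1 p) + b * (cis p * g2 p) + c * g1 p + d * g2 p) x
       = a * fc g1 (x + 1) + b * fc g2 (x + 1) + c * fc g1 x + d * fc g2 x"
  using assms
  by (simp add: fc_add fc_cmult fc_shift_plus continuous_intros)

lemma fc_lin4_minus:
  assumes "continuous_on {-pi..pi} g1" "continuous_on {-pi..pi} g2"
  shows "fc (\<lambda>p. a * (cis (- p) * g1 p) + b * (cis (- p) * g2 p) + c * g1 p + d * g2 p) x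
       = a * fc g1 (x - 1) + b * fc g2 (x - 1) + c * fc g1 x + d * fc g2 x"
  using assms
  by (simp add: fc_add fc_cmult fc_shift_minus continuous_intros)

lemma fc_lin4_mixed:
  assumes "continuous_on {-pi..pi} g1" "continuous_on {-pi..pi} g2"
  shows "fc (\<lambda>p. a * (cis (- p) * g1 p) + b * (cis p * g2 p) + c * g1 p + d * g2 p) x
       = a * fc g1 (x - 1) + b * fc g2 (x + 1) + c * fc g1 x + d * fc g2 x"
  using assms
  by (simp add: fc_add fc_cmult fc_shift_minus fc_shift_plus continuous_intros)

definition uF1 :: "real \<Rightarrow> real \<Rightarrow> int \<Rightarrow> int \<Rightarrow> complex" where
  "uF1 \<mu> \<delta> x t = fc (gF1 \<mu> \<delta> t) x"
definition uF2 :: "real \<Rightarrow> real \<Rightarrow> int \<Rightarrow> int \<Rightarrow> complex" where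
  "uF2 \<mu> \<delta> x t = fc (gF2 \<mu> \<delta> t) x"

lemma cont_gF_p:
  assumes "\<mu> > 0" "0 \<le> \<delta>" "\<delta> < 1"
  shows "continuous_on A (gF1 \<mu> \<delta> t)" "continuous_on A (gF2 \<mu> \<delta> t)"
proof -
  have i: "continuous_on A (\<lambda>p::real. (\<delta>, p))" by (intro continuous_intros)
  have s: "(\<lambda>p. (\<delta>, p)) ` A \<subseteq> SD" using assms unfolding SD_def by auto
  show "continuous_on A (gF1 \<mu> \<delta> t)"
    using continuous_on_compose[OF i continuous_on_subset[OF cont_gF(1)[OF assms(1)] s]] by (simp add: o_def)
  show "continuous_on A (gF2 \<mu> \<delta> t)"
    using continuous_on_compose[OF i continuous_on_subset[OF cont_gF(2)[OF assms(1)] s]] by (simp add: o_def)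
qed

lemma cont_gT_p:
  assumes "\<mu> > 0" "0 \<le> \<delta>" "\<delta> < 1"
  shows "continuous_on A (gT1 \<mu> e1 e2 \<delta> t)" "continuous_on A (gT2 \<mu> e1 e2 \<delta> t)"
proof -
  have i: "continuous_on A (\<lambda>p::real. (\<delta>, p))" by (intro continuous_intros)
  have s: "(\<lambda>p. (\<delta>, p)) ` A \<subseteq> SD" using assms unfolding SD_def by auto
  show "continuous_on A (gT1 \<mu> e1 e2 \<delta> t)"
    using continuous_on_compose[OF i continuous_on_subset[OF cont_gT(1)[OF assms(1)] s]] by (simp add: o_def)
  show "continuous_on A (gT2 \<mu> e1 e2 \<delta> t)"
    using continuous_on_compose[OF i continuous_on_subset[OF cont_gT(2)[OF assms(1)] s]] by (simp add: o_def)
qed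

lemma uF_rec:
  assumes "\<mu> > 0" "0 \<le> \<delta>" "\<delta> < 1"
  shows "uF1 \<mu> \<delta> x (t + 1) = Ev1 \<mu> \<delta> (uF1 \<mu> \<delta>) (uF2 \<mu> \<delta>) x t"
    and "uF2 \<mu> \<delta> x (t + 1) = Ev2 \<mu> \<delta> (uF1 \<mu> \<delta>) (uF2 \<mu> \<delta>) x t + (if x = 0 \<and> t + 1 = 0 then 2 else 0)"
proof -
  note R = green_rec[OF det_W[OF assms(2,3)] tauf_props(4)[OF assms, unfolded tauf_def]]
  note C = cont_gF_p[OF assms, of "{-pi..pi}"]
  have e1: "gF1 \<mu> \<delta> (t + 1) = (\<lambda>p. (cA \<mu> * cB \<delta>) * (cis p * gF1 \<mu> \<delta> t p) + (- cA \<mu> * cB \<delta> * \<i> * complex_of_real \<delta>) * (cis p * gF2 \<mu> \<delta> t p)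
       + (cA \<mu> * cB \<delta> * \<i> * complex_of_real (\<mu> * \<delta>)) * gF1 \<mu> \<delta> t p + (cA \<mu> * cB \<delta> * complex_of_real \<mu>) * gF2 \<mu> \<delta> t p)"
  proof (rule ext)
    fix p
    have "gF1 \<mu> \<delta> (t + 1) p = W11 \<mu> \<delta> p * gF1 \<mu> \<delta> t p + W12 \<mu> \<delta> p * gF2 \<mu> \<delta> t p"
      by (simp add: gF1_def gF2_def R(1))
    moreover have "W11 \<mu> \<delta> p * a + W12 \<mu> \<delta> p * b = (cA \<mu> * cB \<delta>) * (cis p * a) + (- cA \<mu> * cB \<delta> * \<i> * complex_of_real \<delta>) * (cis p * b)
       + (cA \<mu> * cB \<delta> * \<i> * complex_of_real (\<mu> * \<delta>)) * a + (cA \<mu> * cB \<delta> * complex_of_real \<mu>) * b" for a b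
      by (simp add: W11_def W12_def algebra_simps)
    ultimately show "gF1 \<mu> \<delta> (t + 1) p = (cA \<mu> * cB \<delta>) * (cis p * gF1 \<mu> \<delta> t p) + (- cA \<mu> * cB \<delta> * \<i> * complex_of_real \<delta>) * (cis p * gF2 \<mu> \<delta> t p)
       + (cA \<mu> * cB \<delta> * \<i> * complex_of_real (\<mu> * \<delta>)) * gF1 \<mu> \<delta> t p + (cA \<mu> * cB \<delta> * complex_of_real \<mu>) * gF2 \<mu> \<delta> t p" by simp
  qed
  have e2: "gF2 \<mu> \<delta> (t + 1) = (\<lambda>p. (cA \<mu> * cB \<delta> * \<i> * complex_of_real \<delta>) * (cis (- p) * gF1 \<mu> \<delta> t p) + (cA \<mu> * cB \<delta>) * (cis (- p) * gF2 \<mu> \<delta> t p)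
       + (- cA \<mu> * cB \<delta> * complex_of_real \<mu>) * gF1 \<mu> \<delta> t p + (cA \<mu> * cB \<delta> * \<i> * complex_of_real (\<mu> * \<delta>)) * gF2 \<mu> \<delta> t p
       + (if t = -1 then 2 else 0))"
  proof (rule ext)
    fix p
    have "gF2 \<mu> \<delta> (t + 1) p = W21 \<mu> \<delta> p * gF1 \<mu> \<delta> t p + W22 \<mu> \<delta> p * gF2 \<mu> \<delta> t p + (if t = -1 then 2 else 0)"
      by (simp add: gF1_def gF2_def R(2))
    moreover have "W21 \<mu> \<delta> p * a + W22 \<mu> \<delta> p * b = (cA \<mu> * cB \<delta> * \<i> * complex_of_real \<delta>) * (cis (- p) * a) + (cA \<mu> * cB \<delta>) * (cis (- p) * b)
       + (- cA \<mu> * cB \<delta> * complex_of_real \<mu>) * a + (cA \<mu> * cB \<delta> * \<i> * complex_of_real (\<mu> * \<delta>)) * b" for a b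
      by (simp add: W21_def W22_def algebra_simps)
    ultimately show "gF2 \<mu> \<delta> (t + 1) p = (cA \<mu> * cB \<delta> * \<i> * complex_of_real \<delta>) * (cis (- p) * gF1 \<mu> \<delta> t p) + (cA \<mu> * cB \<delta>) * (cis (- p) * gF2 \<mu> \<delta> t p)
       + (- cA \<mu> * cB \<delta> * complex_of_real \<mu>) * gF1 \<mu> \<delta> t p + (cA \<mu> * cB \<delta> * \<i> * complex_of_real (\<mu> * \<delta>)) * gF2 \<mu> \<delta> t p
       + (if t = -1 then 2 else 0)" by simp
  qed
  show "uF1 \<mu> \<delta> x (t + 1) = Ev1 \<mu> \<delta> (uF1 \<mu> \<delta>) (uF2 \<mu> \<delta>) x t"
    unfolding uF1_def e1 fc_lin4_plus[OF C] unfolding Ev1_def uF1_def uF2_def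
    by (simp add: algebra_simps)
  have "fc (gF2 \<mu> \<delta> (t + 1)) x = fc (\<lambda>p. (cA \<mu> * cB \<delta> * \<i> * complex_of_real \<delta>) * (cis (- p) * gF1 \<mu> \<delta> t p) + (cA \<mu> * cB \<delta>) * (cis (- p) * gF2 \<mu> \<delta> t p)
       + (- cA \<mu> * cB \<delta> * complex_of_real \<mu>) * gF1 \<mu> \<delta> t p + (cA \<mu> * cB \<delta> * \<i> * complex_of_real (\<mu> * \<delta>)) * gF2 \<mu> \<delta> t p) x
       + fc (\<lambda>p. (if t = -1 then 2 else 0)) x"
    unfolding e2 by (rule fc_add) (intro continuous_intros C)+
  then show "uF2 \<mu> \<delta> x (t + 1) = Ev2 \<mu> \<delta> (uF1 \<mu> \<delta>) (uF2 \<mu> \<delta>) x t + (if x = 0 \<and> t + 1 = 0 then 2 else 0)"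
    unfolding uF2_def fc_lin4_minus[OF C] fc_const unfolding Ev2_def uF1_def uF2_def
    by (auto simp: algebra_simps)
qed

definition phT1 :: "real \<Rightarrow> complex \<Rightarrow> complex \<Rightarrow> real \<Rightarrow> int \<Rightarrow> int \<Rightarrow> complex" where
  "phT1 \<mu> e1 e2 \<delta> y t = fc (gT1 \<mu> e1 e2 \<delta> (- t)) y"
definition phT2 :: "real \<Rightarrow> complex \<Rightarrow> complex \<Rightarrow> real \<Rightarrow> int \<Rightarrow> int \<Rightarrow> complex" where
  "phT2 \<mu> e1 e2 \<delta> y t = fc (gT2 \<mu> e1 e2 \<delta> (- t)) y"

lemma phT_rec:
  assumes "\<mu> > 0" "0 \<le> \<delta>" "\<delta> < 1"
  shows "phT1 \<mu> e1 e2 \<delta> y t = UT1 \<mu> \<delta> (phT1 \<mu> e1 e2 \<delta>) (phT2 \<mu> e1 e2 \<delta>) y (t + 1) + (if y = 0 \<and> t = 0 then e1 else 0)"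
    and "phT2 \<mu> e1 e2 \<delta> y t = UT2 \<mu> \<delta> (phT1 \<mu> e1 e2 \<delta>) (phT2 \<mu> e1 e2 \<delta>) y (t + 1) + (if y = 0 \<and> t = 0 then e2 else 0)"
proof -
  have det: "W11 \<mu> \<delta> (- p) * W22 \<mu> \<delta> (- p) - W21 \<mu> \<delta> (- p) * W12 \<mu> \<delta> (- p) = 1" for p
    using det_W[OF assms(2,3), of \<mu> "-p"] by (simp add: mult.commute)
  have ff: "ffun (W11 \<mu> \<delta> (- p) + W22 \<mu> \<delta> (- p)) \<noteq> 0" for p
    using tauf_props(4)[OF assms, of "-p"] unfolding tauf_def .
  have R1: "gT1 \<mu> e1 e2 \<delta> (s + 1) p = W11 \<mu> \<delta> (- p) * gT1 \<mu> e1 e2 \<delta> s p + W21 \<mu> \<delta> (- p) * gT2 \<mu> e1 e2 \<delta> s p + (if s = -1 then e1 else 0)"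
    and R2: "gT2 \<mu> e1 e2 \<delta> (s + 1) p = W12 \<mu> \<delta> (- p) * gT1 \<mu> e1 e2 \<delta> s p + W22 \<mu> \<delta> (- p) * gT2 \<mu> e1 e2 \<delta> s p + (if s = -1 then e2 else 0)" for s p
    unfolding gT1_def gT2_def using green_rec[OF det ff] by blast+
  note C = cont_gT_p[OF assms, of "{-pi..pi}" e1 e2]
  have mt: "- t = - (t + 1) + 1" by simp
  have e1: "gT1 \<mu> e1 e2 \<delta> (- t) = (\<lambda>p. (cA \<mu> * cB \<delta>) * (cis (- p) * gT1 \<mu> e1 e2 \<delta> (- (t + 1)) p) + (cA \<mu> * cB \<delta> * \<i> * complex_of_real \<delta>) * (cis p * gT2 \<mu> e1 e2 \<delta> (- (t + 1)) p)
       + (cA \<mu> * cB \<delta> * \<i> * complex_of_real (\<mu> * \<delta>)) * gT1 \<mu> e1 e2 \<delta> (- (t + 1)) p + (- cA \<mu> * cB \<delta> * complex_of_real \<mu>) * gT2 \<mu> e1 e2 \<delta> (- (t + 1)) p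
       + (if t = 0 then e1 else 0))"
  proof (rule ext)
    fix p
    have "W11 \<mu> \<delta> (- p) * a + W21 \<mu> \<delta> (- p) * b = (cA \<mu> * cB \<delta>) * (cis (- p) * a) + (cA \<mu> * cB \<delta> * \<i> * complex_of_real \<delta>) * (cis p * b)
       + (cA \<mu> * cB \<delta> * \<i> * complex_of_real (\<mu> * \<delta>)) * a + (- cA \<mu> * cB \<delta> * complex_of_real \<mu>) * b" for a b
      by (simp add: W11_def W21_def algebra_simps)
    then show "gT1 \<mu> e1 e2 \<delta> (- t) p = (cA \<mu> * cB \<delta>) * (cis (- p) * gT1 \<mu> e1 e2 \<delta> (- (t + 1)) p) + (cA \<mu> * cB \<delta> * \<i> * complex_of_real \<delta>) * (cis p * gT2 \<mu> e1 e2 \<delta> (- (t + 1)) p)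
       + (cA \<mu> * cB \<delta> * \<i> * complex_of_real (\<mu> * \<delta>)) * gT1 \<mu> e1 e2 \<delta> (- (t + 1)) p + (- cA \<mu> * cB \<delta> * complex_of_real \<mu>) * gT2 \<mu> e1 e2 \<delta> (- (t + 1)) p
       + (if t = 0 then e1 else 0)"
      by (subst mt, subst R1) simp
  qed
  have e2: "gT2 \<mu> e1 e2 \<delta> (- t) = (\<lambda>p. (- cA \<mu> * cB \<delta> * \<i> * complex_of_real \<delta>) * (cis (- p) * gT1 \<mu> e1 e2 \<delta> (- (t + 1)) p) + (cA \<mu> * cB \<delta>) * (cis p * gT2 \<mu> e1 e2 \<delta> (- (t + 1)) p)
       + (cA \<mu> * cB \<delta> * complex_of_real \<mu>) * gT1 \<mu> e1 e2 \<delta> (- (t + 1)) p + (cA \<mu> * cB \<delta> * \<i> * complex_of_real (\<mu> * \<delta>)) * gT2 \<mu> e1 e2 \<delta> (- (t + 1)) p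
       + (if t = 0 then e2 else 0))"
  proof (rule ext)
    fix p
    have "W12 \<mu> \<delta> (- p) * a + W22 \<mu> \<delta> (- p) * b = (- cA \<mu> * cB \<delta> * \<i> * complex_of_real \<delta>) * (cis (- p) * a) + (cA \<mu> * cB \<delta>) * (cis p * b)
       + (cA \<mu> * cB \<delta> * complex_of_real \<mu>) * a + (cA \<mu> * cB \<delta> * \<i> * complex_of_real (\<mu> * \<delta>)) * b" for a b
      by (simp add: W12_def W22_def algebra_simps)
    then show "gT2 \<mu> e1 e2 \<delta> (- t) p = (- cA \<mu> * cB \<delta> * \<i> * complex_of_real \<delta>) * (cis (- p) * gT1 \<mu> e1 e2 \<delta> (- (t + 1)) p) + (cA \<mu> * cB \<delta>) * (cis p * gT2 \<mu> e1 e2 \<delta> (- (t + 1)) p)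
       + (cA \<mu> * cB \<delta> * complex_of_real \<mu>) * gT1 \<mu> e1 e2 \<delta> (- (t + 1)) p + (cA \<mu> * cB \<delta> * \<i> * complex_of_real (\<mu> * \<delta>)) * gT2 \<mu> e1 e2 \<delta> (- (t + 1)) p
       + (if t = 0 then e2 else 0)"
      by (subst mt, subst R2) simp
  qed
  have "fc (gT1 \<mu> e1 e2 \<delta> (- t)) y = fc (\<lambda>p. (cA \<mu> * cB \<delta>) * (cis (- p) * gT1 \<mu> e1 e2 \<delta> (- (t + 1)) p) + (cA \<mu> * cB \<delta> * \<i> * complex_of_real \<delta>) * (cis p * gT2 \<mu> e1 e2 \<delta> (- (t + 1)) p)
       + (cA \<mu> * cB \<delta> * \<i> * complex_of_real (\<mu> * \<delta>)) * gT1 \<mu> e1 e2 \<delta> (- (t + 1)) p + (- cA \<mu> * cB \<delta> * complex_of_real \<mu>) * gT2 \<mu> e1 e2 \<delta> (- (t + 1)) p) y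
       + fc (\<lambda>p. (if t = 0 then e1 else 0)) y"
    unfolding e1 by (rule fc_add) (intro continuous_intros C)+
  then show "phT1 \<mu> e1 e2 \<delta> y t = UT1 \<mu> \<delta> (phT1 \<mu> e1 e2 \<delta>) (phT2 \<mu> e1 e2 \<delta>) y (t + 1) + (if y = 0 \<and> t = 0 then e1 else 0)"
    unfolding phT1_def fc_lin4_mixed[OF C] fc_const unfolding UT1_def phT1_def phT2_def
    by (auto simp: algebra_simps)
  have "fc (gT2 \<mu> e1 e2 \<delta> (- t)) y = fc (\<lambda>p. (- cA \<mu> * cB \<delta> * \<i> * complex_of_real \<delta>) * (cis (- p) * gT1 \<mu> e1 e2 \<delta> (- (t + 1)) p) + (cA \<mu> * cB \<delta>) * (cis p * gT2 \<mu> e1 e2 \<delta> (- (t + 1)) p)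
       + (cA \<mu> * cB \<delta> * complex_of_real \<mu>) * gT1 \<mu> e1 e2 \<delta> (- (t + 1)) p + (cA \<mu> * cB \<delta> * \<i> * complex_of_real (\<mu> * \<delta>)) * gT2 \<mu> e1 e2 \<delta> (- (t + 1)) p) y
       + fc (\<lambda>p. (if t = 0 then e2 else 0)) y"
    unfolding e2 by (rule fc_add) (intro continuous_intros C)+
  then show "phT2 \<mu> e1 e2 \<delta> y t = UT2 \<mu> \<delta> (phT1 \<mu> e1 e2 \<delta>) (phT2 \<mu> e1 e2 \<delta>) y (t + 1) + (if y = 0 \<and> t = 0 then e2 else 0)"
    unfolding phT2_def fc_lin4_mixed[OF C] fc_const unfolding UT2_def phT1_def phT2_def
    by (auto simp: algebra_simps)
qed


definition l2 :: "(int \<Rightarrow> int \<Rightarrow> complex) \<Rightarrow> bool" where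
  "l2 f \<longleftrightarrow> (\<lambda>(x, t). (cmod (f x t))\<^sup>2) summable_on UNIV"

lemma bij_shift: "bij_betw (\<lambda>z::int \<times> int. (fst z + a, snd z + b)) UNIV UNIV"
  by (rule bij_betw_byWitness[where f'="\<lambda>z. (fst z - a, snd z - b)"]) auto

lemma hs_shift:
  fixes h :: "int \<times> int \<Rightarrow> complex"
  assumes "(h has_sum s) UNIV"
  shows "((\<lambda>z. h (fst z + a, snd z + b)) has_sum s) UNIV"
  using has_sum_reindex_bij_betw[OF bij_shift[of a b], of h s] assms by simp

lemma summable_shift:
  fixes h :: "int \<times> int \<Rightarrow> 'b::{banach}"
  assumes "h summable_on UNIV"
  shows "(\<lambda>z. h (fst z + a, snd z + b)) summable_on UNIV"
  using has_sum_reindex_bij_betw[OF bij_shift[of a b], of h "infsum h UNIV"] has_sum_infsum[OF assms]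
    summable_on_def by fastforce

lemma l2_shift:
  assumes "l2 f"
  shows "l2 (\<lambda>x t. f (x + a) (t + b))"
proof -
  have "(\<lambda>z. (\<lambda>(x, t). (cmod (f x t))\<^sup>2) (fst z + a, snd z + b)) summable_on UNIV"
    using summable_shift assms unfolding l2_def by blast
  then show ?thesis unfolding l2_def by (simp add: case_prod_beta')
qed

lemma ab_le_sq: "0 \<le> (a::real) \<Longrightarrow> 0 \<le> b \<Longrightarrow> a * b \<le> a\<^sup>2 + b\<^sup>2"
proof -
  assume "0 \<le> a" "0 \<le> b"
  have "0 \<le> (a - b)\<^sup>2" by simp
  then have "2 * (a * b) \<le> a\<^sup>2 + b\<^sup>2" by (simp add: power2_eq_square algebra_simps)
  moreover have "0 \<le> a * b" using \<open>0 \<le> a\<close> \<open>0 \<le> b\<close> by simp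
  ultimately show ?thesis by linarith
qed

lemma prod_l2:
  assumes "l2 f" "l2 g"
  shows "(\<lambda>z. f (fst z) (snd z) * g (fst z) (snd z)) summable_on UNIV"
proof (rule abs_summable_summable)
  have s: "(\<lambda>z. (cmod (f (fst z) (snd z)))\<^sup>2 + (cmod (g (fst z) (snd z)))\<^sup>2) summable_on UNIV"
    using summable_on_add[OF assms[unfolded l2_def]] by (simp add: case_prod_beta')
  show "(\<lambda>z. norm (f (fst z) (snd z) * g (fst z) (snd z))) summable_on UNIV"
    by (rule summable_on_comparison_test[OF s]) (auto simp: norm_mult intro: ab_le_sq)
qed

lemma l2_T:
  assumes "l2 f" "l2 g"
  shows "(\<lambda>z. f (fst z + a) (snd z) * g (fst z) (snd z + 1)) summable_on UNIV"
  using prod_l2[OF l2_shift[OF assms(1), of a 0] l2_shift[OF assms(2), of 0 1]] by simp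

lemma has_sum_delta:
  "((\<lambda>z::int \<times> int. if z = (0, 0) then d else 0) has_sum d) UNIV"
proof -
  have "((\<lambda>z::int \<times> int. if z = (0, 0) then d else 0) has_sum d) {(0, 0)}"
    using has_sum_finite[of "{(0::int, 0::int)}" "\<lambda>z. if z = (0, 0) then d else 0"] by simp
  then show ?thesis
    by (subst has_sum_cong_neutral[where T="{(0,0)}"]) auto
qed

lemma pairing:
  fixes \<psi>1 \<psi>2 \<phi>1 \<phi>2 :: "int \<Rightarrow> int \<Rightarrow> complex"
  assumes hom1: "\<And>x t. \<psi>1 x (t + 1) = Ev1 \<mu> \<delta> \<psi>1 \<psi>2 x t"
    and hom2: "\<And>x t. \<psi>2 x (t + 1) = Ev2 \<mu> \<delta> \<psi>1 \<psi>2 x t"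
    and tr1: "\<And>y t. \<phi>1 y t = UT1 \<mu> \<delta> \<phi>1 \<phi>2 y (t + 1) + (if y = 0 \<and> t = 0 then e1 else 0)"
    and tr2: "\<And>y t. \<phi>2 y t = UT2 \<mu> \<delta> \<phi>1 \<phi>2 y (t + 1) + (if y = 0 \<and> t = 0 then e2 else 0)"
    and l: "l2 \<psi>1" "l2 \<psi>2" "l2 \<phi>1" "l2 \<phi>2"
  shows "e1 * \<psi>1 0 0 + e2 * \<psi>2 0 0 = 0"
proof -
  define K where "K = cA \<mu> * cB \<delta>"
  define m where "m = complex_of_real \<mu>"
  define d where "d = complex_of_real \<delta>"
  define T1 where "T1 = (\<lambda>z. \<psi>1 (fst z + 1) (snd z) * \<phi>1 (fst z) (snd z + 1))"
  define T2 where "T2 = (\<lambda>z. \<psi>2 (fst z + 1) (snd z) * \<phi>1 (fst z) (snd z + 1))"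
  define T3 where "T3 = (\<lambda>z. \<psi>2 (fst z + 0) (snd z) * \<phi>1 (fst z) (snd z + 1))"
  define T4 where "T4 = (\<lambda>z. \<psi>1 (fst z + 0) (snd z) * \<phi>1 (fst z) (snd z + 1))"
  define T5 where "T5 = (\<lambda>z. \<psi>2 (fst z + -1) (snd z) * \<phi>2 (fst z) (snd z + 1))"
  define T6 where "T6 = (\<lambda>z. \<psi>1 (fst z + -1) (snd z) * \<phi>2 (fst z) (snd z + 1))"
  define T7 where "T7 = (\<lambda>z. \<psi>1 (fst z + 0) (snd z) * \<phi>2 (fst z) (snd z + 1))"
  define T8 where "T8 = (\<lambda>z. \<psi>2 (fst z + 0) (snd z) * \<phi>2 (fst z) (snd z + 1))"
  have h1: "(T1 has_sum infsum T1 UNIV) UNIV" unfolding T1_def by (rule has_sum_infsum, rule l2_T) (use l in auto)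
  have h2: "(T2 has_sum infsum T2 UNIV) UNIV" unfolding T2_def by (rule has_sum_infsum, rule l2_T) (use l in auto)
  have h3: "(T3 has_sum infsum T3 UNIV) UNIV" unfolding T3_def by (rule has_sum_infsum, rule l2_T) (use l in auto)
  have h4: "(T4 has_sum infsum T4 UNIV) UNIV" unfolding T4_def by (rule has_sum_infsum, rule l2_T) (use l in auto)
  have h5: "(T5 has_sum infsum T5 UNIV) UNIV" unfolding T5_def by (rule has_sum_infsum, rule l2_T) (use l in auto)
  have h6: "(T6 has_sum infsum T6 UNIV) UNIV" unfolding T6_def by (rule has_sum_infsum, rule l2_T) (use l in auto)
  have h7: "(T7 has_sum infsum T7 UNIV) UNIV" unfolding T7_def by (rule has_sum_infsum, rule l2_T) (use l in auto)
  have h8: "(T8 has_sum infsum T8 UNIV) UNIV" unfolding T8_def by (rule has_sum_infsum, rule l2_T) (use l in auto)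
  define X where "X = K * infsum T1 UNIV + (- \<i> * K * d) * infsum T2 UNIV + (K * m) * infsum T3 UNIV + (\<i> * K * m * d) * infsum T4 UNIV
     + K * infsum T5 UNIV + (\<i> * K * d) * infsum T6 UNIV + (- K * m) * infsum T7 UNIV + (\<i> * K * m * d) * infsum T8 UNIV"
  define P where "P = (\<lambda>z. \<psi>1 (fst z) (snd z) * \<phi>1 (fst z) (snd z) + \<psi>2 (fst z) (snd z) * \<phi>2 (fst z) (snd z))"
  have Ps: "P summable_on UNIV"
    unfolding P_def by (intro summable_on_add prod_l2 l)
  have hB: "((\<lambda>z. K * T1 z + (- \<i> * K * d) * T2 z + (K * m) * T3 z + (\<i> * K * m * d) * T4 z
     + K * T5 z + (\<i> * K * d) * T6 z + (- K * m) * T7 z + (\<i> * K * m * d) * T8 z) has_sum X) UNIV"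
    unfolding X_def by (intro has_sum_add has_sum_cmult_right h1 h2 h3 h4 h5 h6 h7 h8)
  have eB: "K * T1 z + (- \<i> * K * d) * T2 z + (K * m) * T3 z + (\<i> * K * m * d) * T4 z
     + K * T5 z + (\<i> * K * d) * T6 z + (- K * m) * T7 z + (\<i> * K * m * d) * T8 z = P (fst z + 0, snd z + 1)" for z
    unfolding P_def T1_def T2_def T3_def T4_def T5_def T6_def T7_def T8_def
    by (simp add: hom1 hom2, simp add: Ev1_def Ev2_def K_def m_def d_def algebra_simps)
  have "((\<lambda>z. P (fst z + 0, snd z + 1)) has_sum X) UNIV" using hB unfolding eB .
  moreover have "((\<lambda>z. P (fst z + 0, snd z + 1)) has_sum infsum P UNIV) UNIV"
    by (rule hs_shift, rule has_sum_infsum, rule Ps)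
  ultimately have PX: "infsum P UNIV = X" using has_sum_unique by blast
  have hA: "((\<lambda>z. K * T1 (fst z + -1, snd z + 0) + (- \<i> * K * d) * T2 (fst z + -1, snd z + 0) + (K * m) * T3 (fst z + 0, snd z + 0) + (\<i> * K * m * d) * T4 (fst z + 0, snd z + 0)
     + K * T5 (fst z + 1, snd z + 0) + (\<i> * K * d) * T6 (fst z + 1, snd z + 0) + (- K * m) * T7 (fst z + 0, snd z + 0) + (\<i> * K * m * d) * T8 (fst z + 0, snd z + 0)) has_sum X) UNIV"
    unfolding X_def by (intro has_sum_add has_sum_cmult_right hs_shift h1 h2 h3 h4 h5 h6 h7 h8)
  define D where "D = e1 * \<psi>1 0 0 + e2 * \<psi>2 0 0"
  have eA: "K * T1 (fst z + -1, snd z + 0) + (- \<i> * K * d) * T2 (fst z + -1, snd z + 0) + (K * m) * T3 (fst z + 0, snd z + 0) + (\<i> * K * m * d) * T4 (fst z + 0, snd z + 0)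
     + K * T5 (fst z + 1, snd z + 0) + (\<i> * K * d) * T6 (fst z + 1, snd z + 0) + (- K * m) * T7 (fst z + 0, snd z + 0) + (\<i> * K * m * d) * T8 (fst z + 0, snd z + 0)
     = P z + (- 1) * (if z = (0, 0) then D else 0)" for z
  proof -
    obtain y t where z: "z = (y, t)" by fastforce
    have "P z = \<psi>1 y t * (UT1 \<mu> \<delta> \<phi>1 \<phi>2 y (t + 1) + (if y = 0 \<and> t = 0 then e1 else 0))
              + \<psi>2 y t * (UT2 \<mu> \<delta> \<phi>1 \<phi>2 y (t + 1) + (if y = 0 \<and> t = 0 then e2 else 0))"
      unfolding P_def z using tr1[of y t] tr2[of y t] by simp
    then show ?thesis unfolding z T1_def T2_def T3_def T4_def T5_def T6_def T7_def T8_def D_def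
      by (auto simp: UT1_def UT2_def K_def m_def d_def algebra_simps)
  qed
  have "((\<lambda>z. P z + (- 1) * (if z = (0, 0) then D else 0)) has_sum X) UNIV" using hA unfolding eA .
  moreover have "((\<lambda>z. P z + (- 1) * (if z = (0, 0) then D else 0)) has_sum (X + (- 1) * D)) UNIV"
    using PX Ps by (intro has_sum_add has_sum_cmult_right has_sum_delta) auto
  ultimately have "X = X + (- 1) * D" using has_sum_unique by blast
  then have "(- 1) * D = 0" by (metis add_cancel_left_right)
  then show ?thesis unfolding D_def by (simp only: mult_minus1 neg_equal_0_iff_equal)
qed


lemma W_cont_p:
  "continuous_on A (\<lambda>p. W11 \<mu> \<delta> (s * p))" "continuous_on A (\<lambda>p. W12 \<mu> \<delta> (s * p))"
  "continuous_on A (\<lambda>p. W21 \<mu> \<delta> (s * p))" "continuous_on A (\<lambda>p. W22 \<mu> \<delta> (s * p))"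
  unfolding W11_def W12_def W21_def W22_def by (intro continuous_intros)+

lemma l2_uF:
  assumes "\<mu> > 0" "0 < \<delta>" "\<delta> < 1"
  shows "l2 (uF1 \<mu> \<delta>)" "l2 (uF2 \<mu> \<delta>)"
proof -
  have h: "Im (W11 \<mu> \<delta> (1 * p) + W22 \<mu> \<delta> (1 * p)) > 0 \<and> ffun (W11 \<mu> \<delta> (1 * p) + W22 \<mu> \<delta> (1 * p)) \<noteq> 0" for p
    using tauf_props(4,5)[of \<mu> \<delta> p] assms unfolding tauf_def by auto
  obtain C \<rho> where r: "0 \<le> \<rho>" "\<rho> < 1" and b: "\<And>t p. p \<in> {-pi..pi} \<Longrightarrow>
     cmod (G1 (W11 \<mu> \<delta> (1 * p)) (W12 \<mu> \<delta> (1 * p)) (W21 \<mu> \<delta> (1 * p)) (W22 \<mu> \<delta> (1 * p)) 0 2 t) \<le> C * \<rho> ^ nat \<bar>t\<bar> \<and>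
     cmod (G2 (W11 \<mu> \<delta> (1 * p)) (W12 \<mu> \<delta> (1 * p)) (W21 \<mu> \<delta> (1 * p)) (W22 \<mu> \<delta> (1 * p)) 0 2 t) \<le> C * \<rho> ^ nat \<bar>t\<bar>"
    using G_bound[OF W_cont_p(1)[where A="{-pi..pi}" and \<mu>=\<mu> and \<delta>=\<delta> and s=1]
       W_cont_p(2)[where A="{-pi..pi}" and \<mu>=\<mu> and \<delta>=\<delta> and s=1]
       W_cont_p(3)[where A="{-pi..pi}" and \<mu>=\<mu> and \<delta>=\<delta> and s=1]
       W_cont_p(4)[where A="{-pi..pi}" and \<mu>=\<mu> and \<delta>=\<delta> and s=1]] h by blast
  have c: "continuous_on {-pi..pi} (gF1 \<mu> \<delta> t)" "continuous_on {-pi..pi} (gF2 \<mu> \<delta> t)" for t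
    using cont_gF_p assms by auto
  show "l2 (uF1 \<mu> \<delta>)" unfolding l2_def uF1_def
    by (rule l2_fc[OF c(1) _ r]) (use b in \<open>auto simp: gF1_def\<close>)
  show "l2 (uF2 \<mu> \<delta>)" unfolding l2_def uF2_def
    by (rule l2_fc[OF c(2) _ r]) (use b in \<open>auto simp: gF2_def\<close>)
qed

lemma l2_phT:
  assumes "\<mu> > 0" "0 < \<delta>" "\<delta> < 1"
  shows "l2 (phT1 \<mu> e1 e2 \<delta>)" "l2 (phT2 \<mu> e1 e2 \<delta>)"
proof -
  have h: "Im (W11 \<mu> \<delta> (- 1 * p) + W22 \<mu> \<delta> (- 1 * p)) > 0 \<and> ffun (W11 \<mu> \<delta> (- 1 * p) + W22 \<mu> \<delta> (- 1 * p)) \<noteq> 0" for p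
    using tauf_props(4,5)[of \<mu> \<delta> "-p"] assms unfolding tauf_def by auto
  obtain C \<rho> where r: "0 \<le> \<rho>" "\<rho> < 1" and b: "\<And>t p. p \<in> {-pi..pi} \<Longrightarrow>
     cmod (G1 (W11 \<mu> \<delta> (- 1 * p)) (W21 \<mu> \<delta> (- 1 * p)) (W12 \<mu> \<delta> (- 1 * p)) (W22 \<mu> \<delta> (- 1 * p)) e1 e2 t) \<le> C * \<rho> ^ nat \<bar>t\<bar> \<and>
     cmod (G2 (W11 \<mu> \<delta> (- 1 * p)) (W21 \<mu> \<delta> (- 1 * p)) (W12 \<mu> \<delta> (- 1 * p)) (W22 \<mu> \<delta> (- 1 * p)) e1 e2 t) \<le> C * \<rho> ^ nat \<bar>t\<bar>"
    using G_bound[OF W_cont_p(1)[where A="{-pi..pi}" and \<mu>=\<mu> and \<delta>=\<delta> and s="-1"]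
       W_cont_p(3)[where A="{-pi..pi}" and \<mu>=\<mu> and \<delta>=\<delta> and s="-1"]
       W_cont_p(2)[where A="{-pi..pi}" and \<mu>=\<mu> and \<delta>=\<delta> and s="-1"]
       W_cont_p(4)[where A="{-pi..pi}" and \<mu>=\<mu> and \<delta>=\<delta> and s="-1"]] h by blast
  have c: "continuous_on {-pi..pi} (gT1 \<mu> e1 e2 \<delta> t)" "continuous_on {-pi..pi} (gT2 \<mu> e1 e2 \<delta> t)" for t
    using cont_gT_p assms by auto
  have b': "cmod (gT1 \<mu> e1 e2 \<delta> (- t) p) \<le> C * \<rho> ^ nat \<bar>t\<bar> \<and> cmod (gT2 \<mu> e1 e2 \<delta> (- t) p) \<le> C * \<rho> ^ nat \<bar>t\<bar>"
    if "p \<in> {-pi..pi}" for t p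
    using b[OF that, of "- t"] by (simp add: gT1_def gT2_def)
  show "l2 (phT1 \<mu> e1 e2 \<delta>)" unfolding l2_def phT1_def
    by (rule l2_fc[OF c(1) _ r]) (use b' in auto)
  show "l2 (phT2 \<mu> e1 e2 \<delta>)" unfolding l2_def phT2_def
    by (rule l2_fc[OF c(2) _ r]) (use b' in auto)
qed

lemma uniq_hom:
  fixes \<psi>1 \<psi>2 :: "int \<Rightarrow> int \<Rightarrow> complex"
  assumes "\<mu> > 0" "0 < \<delta>" "\<delta> < 1"
    and hom1: "\<And>x t. \<psi>1 x (t + 1) = Ev1 \<mu> \<delta> \<psi>1 \<psi>2 x t"
    and hom2: "\<And>x t. \<psi>2 x (t + 1) = Ev2 \<mu> \<delta> \<psi>1 \<psi>2 x t"
    and l: "l2 \<psi>1" "l2 \<psi>2"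
  shows "\<psi>1 x0 t0 = 0 \<and> \<psi>2 x0 t0 = 0"
proof -
  define a1 where "a1 = (\<lambda>x t. \<psi>1 (x + x0) (t + t0))"
  define a2 where "a2 = (\<lambda>x t. \<psi>2 (x + x0) (t + t0))"
  have h1: "a1 x (t + 1) = Ev1 \<mu> \<delta> a1 a2 x t" for x t
  proof -
    have "a1 x (t + 1) = \<psi>1 (x + x0) ((t + t0) + 1)" unfolding a1_def by (simp add: ac_simps)
    also have "\<dots> = Ev1 \<mu> \<delta> \<psi>1 \<psi>2 (x + x0) (t + t0)" by (rule hom1)
    also have "\<dots> = Ev1 \<mu> \<delta> a1 a2 x t" unfolding Ev1_def a1_def a2_def by (simp add: ac_simps)
    finally show ?thesis .
  qed
  have h2: "a2 x (t + 1) = Ev2 \<mu> \<delta> a1 a2 x t" for x t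
  proof -
    have "a2 x (t + 1) = \<psi>2 (x + x0) ((t + t0) + 1)" unfolding a2_def by (simp add: ac_simps)
    also have "\<dots> = Ev2 \<mu> \<delta> \<psi>1 \<psi>2 (x + x0) (t + t0)" by (rule hom2)
    also have "\<dots> = Ev2 \<mu> \<delta> a1 a2 x t" 
    proof -
      have e: "x - 1 + x0 = x + x0 - 1" by simp
      show ?thesis unfolding Ev2_def a1_def a2_def e by (simp add: ac_simps)
    qed
    finally show ?thesis .
  qed
  have la: "l2 a1" "l2 a2" unfolding a1_def a2_def using l2_shift l by auto
  note T = phT_rec[OF assms(1) _ assms(3)] l2_phT[OF assms(1-3)]
  have "1 * a1 0 0 + 0 * a2 0 0 = 0"
    by (rule pairing[OF h1 h2, of "phT1 \<mu> 1 0 \<delta>" "phT2 \<mu> 1 0 \<delta>"]) (use T assms la in auto)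
  moreover have "0 * a1 0 0 + 1 * a2 0 0 = 0"
    by (rule pairing[OF h1 h2, of "phT1 \<mu> 0 1 \<delta>" "phT2 \<mu> 0 1 \<delta>"]) (use T assms la in auto)
  ultimately show ?thesis unfolding a1_def a2_def by simp
qed


lemma even_real_int: "even n \<Longrightarrow> even_real (of_int n)"
  unfolding even_real_def by auto

lemma odd_real_int: "odd n \<Longrightarrow> odd_real (of_int n)"
  unfolding odd_real_def by auto

lemma even_not_odd_real: "odd_real r \<Longrightarrow> \<not> even_real r"
  unfolding even_real_def odd_real_def by auto

lemma flr: "r = of_int k \<Longrightarrow> \<lfloor>r\<rfloor> = k" by simp

lemma pt_even:
  assumes "\<epsilon> > 0" "x = \<epsilon> * of_int a" "t = \<epsilon> * of_int s"
  shows "(x, t) \<in> lat \<epsilon>" "even_real (2 * x / \<epsilon>)" "even_real (2 * t / \<epsilon>)"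
proof -
  have e1: "2 * x / \<epsilon> = of_int (2 * a)" "2 * t / \<epsilon> = of_int (2 * s)" "(x + t) / \<epsilon> = of_int (a + s)"
    using assms by (simp_all add: field_simps)
  show "(x, t) \<in> lat \<epsilon>" unfolding lat_def using e1 by (auto intro: Ints_of_int)
  show "even_real (2 * x / \<epsilon>)" "even_real (2 * t / \<epsilon>)" unfolding e1
    using even_real_int[of "2 * a"] even_real_int[of "2 * s"] by simp_all
qed

lemma pt_odd:
  assumes "\<epsilon> > 0" "x = \<epsilon> * of_int a + \<epsilon> / 2" "t = \<epsilon> * of_int s + \<epsilon> / 2"
  shows "(x, t) \<in> lat \<epsilon>" "odd_real (2 * x / \<epsilon>)" "odd_real (2 * t / \<epsilon>)"
proof -
  have e1: "2 * x / \<epsilon> = of_int (2 * a + 1)" "2 * t / \<epsilon> = of_int (2 * s + 1)" "(x + t) / \<epsilon> = of_int (a + s + 1)"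
    using assms by (simp_all add: field_simps)
  show "(x, t) \<in> lat \<epsilon>" unfolding lat_def using e1 by (auto intro: Ints_of_int)
  show "odd_real (2 * x / \<epsilon>)" "odd_real (2 * t / \<epsilon>)" unfolding e1
    using odd_real_int[of "2 * a + 1"] odd_real_int[of "2 * s + 1"] by simp_all
qed

lemma lat_cases:
  assumes "\<epsilon> > 0" "(x, t) \<in> lat \<epsilon>"
  shows "(\<exists>a s. x = \<epsilon> * of_int a \<and> t = \<epsilon> * of_int s) \<or>
         (\<exists>a s. x = \<epsilon> * of_int a + \<epsilon> / 2 \<and> t = \<epsilon> * of_int s + \<epsilon> / 2)"
proof -
  obtain n1 n2 n3 where n: "2 * x / \<epsilon> = of_int n1" "2 * t / \<epsilon> = of_int n2" "(x + t) / \<epsilon> = of_int n3"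
    using assms(2) unfolding lat_def by (auto elim!: Ints_cases)
  have "of_int n1 + of_int n2 = 2 * x / \<epsilon> + 2 * t / \<epsilon>" using n by simp
  also have "\<dots> = 2 * ((x + t) / \<epsilon>)" by (simp add: add_divide_distrib distrib_left)
  finally have "of_int n1 + of_int n2 = (2::real) * of_int n3" using n by simp
  then have "n1 + n2 = 2 * n3" by (metis of_int_add of_int_eq_iff of_int_mult of_int_numeral)
  then have par: "even n1 = even n2" by (metis even_add even_mult_iff even_numeral)
  have x: "x = \<epsilon> * of_int n1 / 2" and t: "t = \<epsilon> * of_int n2 / 2" using n assms(1) by (simp_all add: field_simps)
  show ?thesis
  proof (cases "even n1")
    case True
    then obtain a s where "n1 = 2 * a" "n2 = 2 * s" using par by (auto elim!: evenE)
    then show ?thesis using x t by auto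
  next
    case False
    then obtain a s where "n1 = 2 * a + 1" "n2 = 2 * s + 1" using par by (auto elim!: oddE)
    then have "x = \<epsilon> * of_int a + \<epsilon> / 2 \<and> t = \<epsilon> * of_int s + \<epsilon> / 2" using x t by (simp add: field_simps)
    then show ?thesis by blast
  qed
qed

definition solA1 :: "real \<Rightarrow> real \<Rightarrow> real \<Rightarrow> real \<Rightarrow> real \<Rightarrow> complex" where
  "solA1 m \<epsilon> \<delta> x t = (if (x, t) \<in> lat \<epsilon> then
      (if even_real (2 * x / \<epsilon>) then uF1 (m * \<epsilon>) \<delta> \<lfloor>x / \<epsilon>\<rfloor> \<lfloor>t / \<epsilon>\<rfloor>
       else cB \<delta> * (uF1 (m * \<epsilon>) \<delta> \<lfloor>x / \<epsilon> + 1 / 2\<rfloor> \<lfloor>t / \<epsilon> - 1 / 2\<rfloor>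
                    - \<i> * complex_of_real \<delta> * uF2 (m * \<epsilon>) \<delta> \<lfloor>x / \<epsilon> + 1 / 2\<rfloor> \<lfloor>t / \<epsilon> - 1 / 2\<rfloor>))
     else 0)"

definition solA2 :: "real \<Rightarrow> real \<Rightarrow> real \<Rightarrow> real \<Rightarrow> real \<Rightarrow> complex" where
  "solA2 m \<epsilon> \<delta> x t = (if (x, t) \<in> lat \<epsilon> then
      (if even_real (2 * x / \<epsilon>) then uF2 (m * \<epsilon>) \<delta> \<lfloor>x / \<epsilon>\<rfloor> \<lfloor>t / \<epsilon>\<rfloor>
       else cB \<delta> * (uF2 (m * \<epsilon>) \<delta> \<lfloor>x / \<epsilon> - 1 / 2\<rfloor> \<lfloor>t / \<epsilon> - 1 / 2\<rfloor>
                    + \<i> * complex_of_real \<delta> * uF1 (m * \<epsilon>) \<delta> \<lfloor>x / \<epsilon> - 1 / 2\<rfloor> \<lfloor>t / \<epsilon> - 1 / 2\<rfloor>))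
     else 0)"

lemma solA_even:
  assumes "\<epsilon> > 0"
  shows "solA1 m \<epsilon> \<delta> (\<epsilon> * of_int a) (\<epsilon> * of_int s) = uF1 (m * \<epsilon>) \<delta> a s"
    and "solA2 m \<epsilon> \<delta> (\<epsilon> * of_int a) (\<epsilon> * of_int s) = uF2 (m * \<epsilon>) \<delta> a s"
  using pt_even[where a=a and s=s, OF assms refl refl] assms unfolding solA1_def solA2_def by simp_all

lemma solA_odd:
  assumes "\<epsilon> > 0"
  shows "solA1 m \<epsilon> \<delta> (\<epsilon> * of_int a + \<epsilon> / 2) (\<epsilon> * of_int s + \<epsilon> / 2)
       = cB \<delta> * (uF1 (m * \<epsilon>) \<delta> (a + 1) s - \<i> * complex_of_real \<delta> * uF2 (m * \<epsilon>) \<delta> (a + 1) s)"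
    and "solA2 m \<epsilon> \<delta> (\<epsilon> * of_int a + \<epsilon> / 2) (\<epsilon> * of_int s + \<epsilon> / 2)
       = cB \<delta> * (uF2 (m * \<epsilon>) \<delta> a s + \<i> * complex_of_real \<delta> * uF1 (m * \<epsilon>) \<delta> a s)"
proof -
  note P = pt_odd[where a=a and s=s, OF assms refl refl]
  have ne: "\<not> even_real (2 * (\<epsilon> * of_int a + \<epsilon> / 2) / \<epsilon>)" using P(2) by (rule even_not_odd_real)
  have f1: "\<lfloor>(\<epsilon> * of_int a + \<epsilon> / 2) / \<epsilon> + 1 / 2\<rfloor> = a + 1" by (rule flr) (use assms in \<open>simp add: field_simps\<close>)
  have f2: "\<lfloor>(\<epsilon> * of_int s + \<epsilon> / 2) / \<epsilon> - 1 / 2\<rfloor> = s" by (rule flr) (use assms in \<open>simp add: field_simps\<close>)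
  have f3: "\<lfloor>(\<epsilon> * of_int a + \<epsilon> / 2) / \<epsilon> - 1 / 2\<rfloor> = a" by (rule flr) (use assms in \<open>simp add: field_simps\<close>)
  show "solA1 m \<epsilon> \<delta> (\<epsilon> * of_int a + \<epsilon> / 2) (\<epsilon> * of_int s + \<epsilon> / 2)
       = cB \<delta> * (uF1 (m * \<epsilon>) \<delta> (a + 1) s - \<i> * complex_of_real \<delta> * uF2 (m * \<epsilon>) \<delta> (a + 1) s)"
    unfolding solA1_def using P(1) ne f1 f2 by simp
  show "solA2 m \<epsilon> \<delta> (\<epsilon> * of_int a + \<epsilon> / 2) (\<epsilon> * of_int s + \<epsilon> / 2)
       = cB \<delta> * (uF2 (m * \<epsilon>) \<delta> a s + \<i> * complex_of_real \<delta> * uF1 (m * \<epsilon>) \<delta> a s)"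
    unfolding solA2_def using P(1) ne f3 f2 by simp
qed


lemma cA_conv: "complex_of_real (1 / sqrt (1 + m\<^sup>2 * \<epsilon>\<^sup>2)) = cA (m * \<epsilon>)"
  unfolding cA_def by (simp add: power_mult_distrib)

lemma is_sol_odd:
  assumes S: "is_sol m \<epsilon> \<delta> A1 A2" and e: "\<epsilon> > 0"
  shows "A1 (\<epsilon> * of_int a + \<epsilon> / 2) (\<epsilon> * of_int s + \<epsilon> / 2)
          = cB \<delta> * (A1 (\<epsilon> * of_int (a + 1)) (\<epsilon> * of_int s) - \<i> * complex_of_real \<delta> * A2 (\<epsilon> * of_int (a + 1)) (\<epsilon> * of_int s))"
    and "A2 (\<epsilon> * of_int a + \<epsilon> / 2) (\<epsilon> * of_int s + \<epsilon> / 2)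
          = cB \<delta> * (A2 (\<epsilon> * of_int a) (\<epsilon> * of_int s) + \<i> * complex_of_real \<delta> * A1 (\<epsilon> * of_int a) (\<epsilon> * of_int s))"
proof -
  have O: "\<And>x t. (x, t) \<in> lat \<epsilon> \<and> odd_real (2 * x / \<epsilon>) \<and> odd_real (2 * t / \<epsilon>) \<Longrightarrow>
        A1 x t = complex_of_real (1 / sqrt (1 - \<delta>\<^sup>2)) *
                 (A1 (x + \<epsilon>/2) (t - \<epsilon>/2) - \<i> * complex_of_real \<delta> * A2 (x + \<epsilon>/2) (t - \<epsilon>/2)) \<and>
        A2 x t = complex_of_real (1 / sqrt (1 - \<delta>\<^sup>2)) *
                 (A2 (x - \<epsilon>/2) (t - \<epsilon>/2) + \<i> * complex_of_real \<delta> * A1 (x - \<epsilon>/2) (t - \<epsilon>/2))"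
    using S unfolding is_sol_def by blast
  note P = pt_odd[where a=a and s=s, OF e refl refl]
  have q1: "\<epsilon> * of_int a + \<epsilon> / 2 + \<epsilon> / 2 = \<epsilon> * of_int (a + 1)" by (simp add: field_simps)
  have q2: "\<epsilon> * of_int s + \<epsilon> / 2 - \<epsilon> / 2 = \<epsilon> * of_int s" by simp
  have q3: "\<epsilon> * of_int a + \<epsilon> / 2 - \<epsilon> / 2 = \<epsilon> * of_int a" by simp
  note O1 = O[OF conjI[OF P(1) conjI[OF P(2,3)]], unfolded q1 q2 q3, folded cB_def]
  show "A1 (\<epsilon> * of_int a + \<epsilon> / 2) (\<epsilon> * of_int s + \<epsilon> / 2)
          = cB \<delta> * (A1 (\<epsilon> * of_int (a + 1)) (\<epsilon> * of_int s) - \<i> * complex_of_real \<delta> * A2 (\<epsilon> * of_int (a + 1)) (\<epsilon> * of_int s))"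
    using O1 by blast
  show "A2 (\<epsilon> * of_int a + \<epsilon> / 2) (\<epsilon> * of_int s + \<epsilon> / 2)
          = cB \<delta> * (A2 (\<epsilon> * of_int a) (\<epsilon> * of_int s) + \<i> * complex_of_real \<delta> * A1 (\<epsilon> * of_int a) (\<epsilon> * of_int s))"
    using O1 by blast
qed

lemma is_sol_rec:
  assumes S: "is_sol m \<epsilon> \<delta> A1 A2" and e: "\<epsilon> > 0"
  defines "v1 \<equiv> (\<lambda>a s. A1 (\<epsilon> * of_int a) (\<epsilon> * of_int s))"
    and "v2 \<equiv> (\<lambda>a s. A2 (\<epsilon> * of_int a) (\<epsilon> * of_int s))"
  shows "v1 a (s + 1) = Ev1 (m * \<epsilon>) \<delta> v1 v2 a s"
    and "v2 a (s + 1) = Ev2 (m * \<epsilon>) \<delta> v1 v2 a s + (if a = 0 \<and> s + 1 = 0 then 2 else 0)"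
proof -
  have E: "\<And>x t. (x, t) \<in> lat \<epsilon> \<and> even_real (2 * x / \<epsilon>) \<and> even_real (2 * t / \<epsilon>) \<Longrightarrow>
        A1 x t = complex_of_real (1 / sqrt (1 + m\<^sup>2 * \<epsilon>\<^sup>2)) *
                 (A1 (x + \<epsilon>/2) (t - \<epsilon>/2) + complex_of_real (m * \<epsilon>) * A2 (x + \<epsilon>/2) (t - \<epsilon>/2)) \<and>
        A2 x t = complex_of_real (1 / sqrt (1 + m\<^sup>2 * \<epsilon>\<^sup>2)) *
                 (A2 (x - \<epsilon>/2) (t - \<epsilon>/2) - complex_of_real (m * \<epsilon>) * A1 (x - \<epsilon>/2) (t - \<epsilon>/2))
                 + (if x = 0 \<and> t = 0 then 2 else 0)"
    using S unfolding is_sol_def by blast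
  note P = pt_even[where a=a and s="s+1", OF e refl refl]
  have q1: "\<epsilon> * of_int (s + 1) - \<epsilon> / 2 = \<epsilon> * of_int s + \<epsilon> / 2" by (simp add: field_simps)
  have q2: "\<epsilon> * of_int a - \<epsilon> / 2 = \<epsilon> * of_int (a - 1) + \<epsilon> / 2" by (simp add: field_simps)
  have z0: "(real_of_int s + 1 = 0) = (s + 1 = 0)" by (metis of_int_1 of_int_add of_int_eq_0_iff)
  have z: "(\<epsilon> * of_int a = 0 \<and> \<epsilon> * of_int (s + 1) = 0) \<longleftrightarrow> (a = 0 \<and> s + 1 = 0)" using e z0 by simp
  note E1 = E[OF conjI[OF P(1) conjI[OF P(2,3)]], unfolded q1 q2 z cA_conv]
  have am: "a - 1 + 1 = a" by simp
  note O1 = is_sol_odd[OF S e, of a s] is_sol_odd[OF S e, of "a - 1" s, unfolded am]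
  show "v1 a (s + 1) = Ev1 (m * \<epsilon>) \<delta> v1 v2 a s"
    unfolding v1_def v2_def Ev1_def using E1 O1 by simp
  show "v2 a (s + 1) = Ev2 (m * \<epsilon>) \<delta> v1 v2 a s + (if a = 0 \<and> s + 1 = 0 then 2 else 0)"
    unfolding v1_def v2_def Ev2_def using E1 O1 by simp
qed


lemma lat_even_pt:
  assumes "\<epsilon> > 0" "(x, t) \<in> lat \<epsilon>" "even_real (2 * x / \<epsilon>)"
  obtains a s where "x = \<epsilon> * of_int a" "t = \<epsilon> * of_int s"
proof -
  from lat_cases[OF assms(1,2)] show ?thesis
  proof
    assume "\<exists>a s. x = \<epsilon> * of_int a + \<epsilon> / 2 \<and> t = \<epsilon> * of_int s + \<epsilon> / 2"
    then obtain a s where "x = \<epsilon> * of_int a + \<epsilon> / 2" "t = \<epsilon> * of_int s + \<epsilon> / 2" by blast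
    then have "odd_real (2 * x / \<epsilon>)" using pt_odd(2)[OF assms(1)] by blast
    then show ?thesis using assms(3) even_not_odd_real by blast
  qed (use that in blast)
qed

lemma lat_odd_pt:
  assumes "\<epsilon> > 0" "(x, t) \<in> lat \<epsilon>" "odd_real (2 * x / \<epsilon>)"
  obtains a s where "x = \<epsilon> * of_int a + \<epsilon> / 2" "t = \<epsilon> * of_int s + \<epsilon> / 2"
proof -
  from lat_cases[OF assms(1,2)] show ?thesis
  proof
    assume "\<exists>a s. x = \<epsilon> * of_int a \<and> t = \<epsilon> * of_int s"
    then obtain a s where "x = \<epsilon> * of_int a" "t = \<epsilon> * of_int s" by blast
    then have "even_real (2 * x / \<epsilon>)" using pt_even(2)[OF assms(1)] by blast
    then show ?thesis using assms(3) even_not_odd_real by blast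
  qed (use that in blast)
qed

lemma sol_is_sol:
  assumes m: "m > 0" and e: "\<epsilon> > 0" and d: "0 < \<delta>" "\<delta> < 1"
  shows "is_sol m \<epsilon> \<delta> (solA1 m \<epsilon> \<delta>) (solA2 m \<epsilon> \<delta>)"
proof -
  have mu: "m * \<epsilon> > 0" using m e by simp
  note R = uF_rec[OF mu less_imp_le[OF d(1)] d(2)]
  have part1: "\<forall>x t. (x, t) \<notin> lat \<epsilon> \<longrightarrow> solA1 m \<epsilon> \<delta> x t = 0 \<and> solA2 m \<epsilon> \<delta> x t = 0"
    unfolding solA1_def solA2_def by simp
  have part2: "solA1 m \<epsilon> \<delta> x t = complex_of_real (1 / sqrt (1 + m\<^sup>2 * \<epsilon>\<^sup>2)) *
                 (solA1 m \<epsilon> \<delta> (x + \<epsilon>/2) (t - \<epsilon>/2) + complex_of_real (m * \<epsilon>) * solA2 m \<epsilon> \<delta> (x + \<epsilon>/2) (t - \<epsilon>/2)) \<and>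
        solA2 m \<epsilon> \<delta> x t = complex_of_real (1 / sqrt (1 + m\<^sup>2 * \<epsilon>\<^sup>2)) *
                 (solA2 m \<epsilon> \<delta> (x - \<epsilon>/2) (t - \<epsilon>/2) - complex_of_real (m * \<epsilon>) * solA1 m \<epsilon> \<delta> (x - \<epsilon>/2) (t - \<epsilon>/2))
                 + (if x = 0 \<and> t = 0 then 2 else 0)"
    if h: "(x, t) \<in> lat \<epsilon> \<and> even_real (2 * x / \<epsilon>) \<and> even_real (2 * t / \<epsilon>)" for x t
  proof -
    obtain a s where xs: "x = \<epsilon> * of_int a" "t = \<epsilon> * of_int s" using lat_even_pt[OF e] h by blast
    define s' where "s' = s - 1"
    have ss: "s = s' + 1" unfolding s'_def by simp
    have q1: "\<epsilon> * of_int s - \<epsilon> / 2 = \<epsilon> * of_int s' + \<epsilon> / 2" unfolding ss by (simp add: field_simps)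
    have q2: "\<epsilon> * of_int a - \<epsilon> / 2 = \<epsilon> * of_int (a - 1) + \<epsilon> / 2" by (simp add: field_simps)
    have am: "a - 1 + 1 = a" by simp
    have z0: "(real_of_int s' + 1 = 0) = (s' + 1 = 0)" by (metis of_int_1 of_int_add of_int_eq_0_iff)
    have z: "(\<epsilon> * of_int a = 0 \<and> \<epsilon> * of_int (s' + 1) = 0) \<longleftrightarrow> (a = 0 \<and> s' + 1 = 0)" using e z0 by simp
    note O = solA_odd[OF e, of m \<delta> a s'] solA_odd[OF e, of m \<delta> "a - 1" s', unfolded am]
    note EV = solA_even[OF e, of m \<delta> a "s' + 1"]
    show ?thesis unfolding xs q1 q2 cA_conv unfolding ss z EV O R Ev1_def Ev2_def
      by simp
  qed
  have part3: "solA1 m \<epsilon> \<delta> x t = complex_of_real (1 / sqrt (1 - \<delta>\<^sup>2)) *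
                 (solA1 m \<epsilon> \<delta> (x + \<epsilon>/2) (t - \<epsilon>/2) - \<i> * complex_of_real \<delta> * solA2 m \<epsilon> \<delta> (x + \<epsilon>/2) (t - \<epsilon>/2)) \<and>
        solA2 m \<epsilon> \<delta> x t = complex_of_real (1 / sqrt (1 - \<delta>\<^sup>2)) *
                 (solA2 m \<epsilon> \<delta> (x - \<epsilon>/2) (t - \<epsilon>/2) + \<i> * complex_of_real \<delta> * solA1 m \<epsilon> \<delta> (x - \<epsilon>/2) (t - \<epsilon>/2))"
    if h: "(x, t) \<in> lat \<epsilon> \<and> odd_real (2 * x / \<epsilon>) \<and> odd_real (2 * t / \<epsilon>)" for x t
  proof -
    obtain a s where xs: "x = \<epsilon> * of_int a + \<epsilon> / 2" "t = \<epsilon> * of_int s + \<epsilon> / 2" using lat_odd_pt[OF e] h by blast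
    have q1: "\<epsilon> * of_int a + \<epsilon> / 2 + \<epsilon> / 2 = \<epsilon> * of_int (a + 1)" by (simp add: field_simps)
    have q2: "\<epsilon> * of_int s + \<epsilon> / 2 - \<epsilon> / 2 = \<epsilon> * of_int s" by simp
    have q3: "\<epsilon> * of_int a + \<epsilon> / 2 - \<epsilon> / 2 = \<epsilon> * of_int a" by simp
    show ?thesis unfolding xs q1 q2 q3 solA_odd[OF e] solA_even[OF e] cB_def by simp
  qed
  have part4: "(\<lambda>(a::int, b::int). (cmod (solA1 m \<epsilon> \<delta> (\<epsilon> * of_int a) (\<epsilon> * of_int b)))\<^sup>2
                          + (cmod (solA2 m \<epsilon> \<delta> (\<epsilon> * of_int a) (\<epsilon> * of_int b)))\<^sup>2) summable_on UNIV"
  proof -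
    have "(\<lambda>z. (\<lambda>(x, t). (cmod (uF1 (m * \<epsilon>) \<delta> x t))\<^sup>2) z + (\<lambda>(x, t). (cmod (uF2 (m * \<epsilon>) \<delta> x t))\<^sup>2) z) summable_on UNIV"
      using summable_on_add l2_uF[OF mu d] unfolding l2_def by blast
    then show ?thesis unfolding solA_even[OF e] by (simp add: case_prod_beta')
  qed
  show ?thesis unfolding is_sol_def using part1 part2 part3 part4 by blast
qed

lemma l2_diff:
  assumes "l2 f" "l2 g"
  shows "l2 (\<lambda>x t. f x t - g x t)"
proof -
  have s: "(\<lambda>z. 2 * (\<lambda>(x, t). (cmod (f x t))\<^sup>2) z + 2 * (\<lambda>(x, t). (cmod (g x t))\<^sup>2) z) summable_on UNIV"
    using assms unfolding l2_def by (intro summable_on_add summable_on_cmult_right)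
  have b: "(cmod (a - b))\<^sup>2 \<le> 2 * (cmod a)\<^sup>2 + 2 * (cmod b)\<^sup>2" for a b :: complex
  proof -
    have "cmod (a - b) \<le> cmod a + cmod b" by (rule norm_triangle_ineq4)
    then have "(cmod (a - b))\<^sup>2 \<le> (cmod a + cmod b)\<^sup>2" by (intro power_mono) auto
    also have "\<dots> \<le> 2 * (cmod a)\<^sup>2 + 2 * (cmod b)\<^sup>2"
    proof -
      have "0 \<le> (cmod a - cmod b)\<^sup>2" by simp
      then show ?thesis by (simp add: power2_eq_square algebra_simps)
    qed
    finally show ?thesis .
  qed
  show ?thesis unfolding l2_def
    by (rule summable_on_comparison_test[OF s]) (auto simp: b)
qed

lemma l2_of_sum:
  assumes "(\<lambda>(a::int, b::int). (cmod (f a b))\<^sup>2 + (cmod (g a b))\<^sup>2) summable_on UNIV"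
  shows "l2 f" "l2 g"
  unfolding l2_def
  by (rule summable_on_comparison_test[OF assms], auto)+

lemma sol_unique:
  assumes m: "m > 0" and e: "\<epsilon> > 0" and d: "0 < \<delta>" "\<delta> < 1"
    and S: "is_sol m \<epsilon> \<delta> B1 B2"
  shows "B1 = solA1 m \<epsilon> \<delta> \<and> B2 = solA2 m \<epsilon> \<delta>"
proof -
  have mu: "m * \<epsilon> > 0" using m e by simp
  define v1 where "v1 = (\<lambda>a s. B1 (\<epsilon> * of_int a) (\<epsilon> * of_int s))"
  define v2 where "v2 = (\<lambda>a s. B2 (\<epsilon> * of_int a) (\<epsilon> * of_int s))"
  have RB1: "v1 a (s + 1) = Ev1 (m * \<epsilon>) \<delta> v1 v2 a s" for a s
    using is_sol_rec(1)[OF S e, of a s] unfolding v1_def v2_def by simp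
  have RB2: "v2 a (s + 1) = Ev2 (m * \<epsilon>) \<delta> v1 v2 a s + (if a = 0 \<and> s + 1 = 0 then 2 else 0)" for a s
    using is_sol_rec(2)[OF S e, of a s] unfolding v1_def v2_def by simp
  note RU = uF_rec[OF mu less_imp_le[OF d(1)] d(2)]
  define p1 where "p1 = (\<lambda>a s. v1 a s - uF1 (m * \<epsilon>) \<delta> a s)"
  define p2 where "p2 = (\<lambda>a s. v2 a s - uF2 (m * \<epsilon>) \<delta> a s)"
  have h1: "p1 x (t + 1) = Ev1 (m * \<epsilon>) \<delta> p1 p2 x t" for x t
    unfolding p1_def p2_def RB1 RU by (simp add: Ev1_def algebra_simps)
  have h2: "p2 x (t + 1) = Ev2 (m * \<epsilon>) \<delta> p1 p2 x t" for x t
    unfolding p1_def p2_def RB2 RU by (simp add: Ev2_def algebra_simps)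
  have lv: "l2 v1" "l2 v2"
    using l2_of_sum[of v1 v2] S unfolding is_sol_def v1_def v2_def by blast+
  have lp: "l2 p1" "l2 p2" unfolding p1_def p2_def using l2_diff lv l2_uF[OF mu d] by auto
  have z: "p1 a s = 0 \<and> p2 a s = 0" for a s by (rule uniq_hom[OF mu d h1 h2 lp])
  have ev: "v1 a s = uF1 (m * \<epsilon>) \<delta> a s" "v2 a s = uF2 (m * \<epsilon>) \<delta> a s" for a s
    using z[of a s] unfolding p1_def p2_def by auto
  have "B1 x t = solA1 m \<epsilon> \<delta> x t \<and> B2 x t = solA2 m \<epsilon> \<delta> x t" for x t
  proof (cases "(x, t) \<in> lat \<epsilon>")
    case False
    then show ?thesis using S unfolding is_sol_def solA1_def solA2_def by auto
  next
    case True
    show ?thesis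
    proof (cases "even_real (2 * x / \<epsilon>)")
      case True2: True
      obtain a s where xs: "x = \<epsilon> * of_int a" "t = \<epsilon> * of_int s" using lat_even_pt[OF e True True2] by blast
      show ?thesis using ev[of a s] unfolding xs solA_even[OF e] v1_def v2_def by simp
    next
      case False2: False
      then obtain a s where xs: "x = \<epsilon> * of_int a + \<epsilon> / 2" "t = \<epsilon> * of_int s + \<epsilon> / 2"
        using lat_cases[OF e True] pt_even(2)[OF e] by blast
      show ?thesis unfolding xs is_sol_odd[OF S e] solA_odd[OF e]
        using ev(1)[of "a + 1" s] ev(2)[of "a + 1" s] ev(1)[of a s] ev(2)[of a s] unfolding v1_def v2_def by simp
    qed
  qed
  then show ?thesis by auto
qed

lemma A_sol_eq:
  assumes m: "m > 0" and e: "\<epsilon> > 0" and d: "0 < \<delta>" "\<delta> < 1"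
  shows "A_sol m \<epsilon> \<delta> = (solA1 m \<epsilon> \<delta>, solA2 m \<epsilon> \<delta>)"
  unfolding A_sol_def
proof (rule the_equality)
  show "is_sol m \<epsilon> \<delta> (fst (solA1 m \<epsilon> \<delta>, solA2 m \<epsilon> \<delta>)) (snd (solA1 m \<epsilon> \<delta>, solA2 m \<epsilon> \<delta>))"
    using sol_is_sol[OF assms] by simp
  fix p assume "is_sol m \<epsilon> \<delta> (fst p) (snd p)"
  then show "p = (solA1 m \<epsilon> \<delta>, solA2 m \<epsilon> \<delta>)"
    using sol_unique[OF assms] by (metis prod.collapse)
qed

lemma A_sol_val:
  assumes m: "m > 0" and e: "\<epsilon> > 0" and d: "0 < \<delta>" "\<delta> < 1"
  shows "fst (A_sol m \<epsilon> \<delta>) (\<epsilon> * of_int a) (\<epsilon> * of_int s) = fc (gF1 (m * \<epsilon>) \<delta> s) a"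
    and "snd (A_sol m \<epsilon> \<delta>) (\<epsilon> * of_int a) (\<epsilon> * of_int s) = fc (gF2 (m * \<epsilon>) \<delta> s) a"
  unfolding A_sol_eq[OF assms] using solA_even[OF e] by (simp_all add: uF1_def uF2_def)


lemma fc_limit:
  fixes g :: "real \<Rightarrow> real \<Rightarrow> complex"
  assumes c: "continuous_on ({0..1/2} \<times> {-pi..pi}) (\<lambda>z. g (fst z) (snd z))"
  shows "((\<lambda>\<delta>. fc (g \<delta>) k) \<longlongrightarrow> fc (g 0) k) (at_right 0)"
proof (rule tendstoI)
  fix e :: real assume e: "e > 0"
  have uc: "uniformly_continuous_on ({0..1/2} \<times> {-pi..pi}) (\<lambda>z. g (fst z) (snd z))"
    by (rule compact_uniformly_continuous[OF c]) (intro compact_Times compact_Icc)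
  obtain d where d: "d > 0" and dd: "\<And>z z'. z \<in> {0..1/2} \<times> {-pi..pi} \<Longrightarrow> z' \<in> {0..1/2} \<times> {-pi..pi} \<Longrightarrow>
      dist z' z < d \<Longrightarrow> dist (g (fst z') (snd z')) (g (fst z) (snd z)) < e / 2"
    using uc e unfolding uniformly_continuous_on_def by (metis half_gt_zero)
  have cp: "continuous_on {-pi..pi} (g \<delta>)" if "\<delta> \<in> {0..1/2}" for \<delta>
  proof -
    have "continuous_on {-pi..pi} ((\<lambda>z. g (fst z) (snd z)) \<circ> (\<lambda>p. (\<delta>, p)))"
      by (rule continuous_on_compose) (use that in \<open>auto intro!: continuous_intros continuous_on_subset[OF c]\<close>)
    then show ?thesis by (simp add: o_def)
  qed
  have "eventually (\<lambda>\<delta>. \<delta> \<in> {0<..<min d (1/2)}) (at_right 0)"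
    by (rule eventually_at_right_real) (use d in simp)
  then show "eventually (\<lambda>\<delta>. dist (fc (g \<delta>) k) (fc (g 0) k) < e) (at_right 0)"
  proof (rule eventually_mono)
    fix \<delta> assume \<delta>: "\<delta> \<in> {0<..<min d (1/2)}"
    then have \<delta>1: "\<delta> \<in> {0..1/2}" by auto
    have \<delta>2: "0 \<le> \<delta>" "\<delta> * 2 \<le> 1" using \<delta>1 by auto
    have b: "norm (cis (p * of_int k) * g \<delta> p - cis (p * of_int k) * g 0 p) \<le> e / 2" if "p \<in> {-pi..pi}" for p
    proof -
      have "dist (g (fst (\<delta>, p)) (snd (\<delta>, p))) (g (fst (0::real, p)) (snd (0::real, p))) < e / 2"
        by (rule dd) (use that \<delta> \<delta>1 \<delta>2 in \<open>auto simp: dist_Pair_Pair dist_real_def\<close>)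
      then show ?thesis by (simp add: dist_norm norm_mult right_diff_distrib[symmetric])
    qed
    have "fc (g \<delta>) k - fc (g 0) k = integral {-pi..pi} (\<lambda>p. cis (p * of_int k) * g \<delta> p - cis (p * of_int k) * g 0 p) / (2 * pi)"
      unfolding fc_def
      by (subst integral_diff) (use \<delta>2 in \<open>auto intro!: integrable_cis_mult cp simp: diff_divide_distrib\<close>)
    moreover have "norm (integral {-pi..pi} (\<lambda>p. cis (p * of_int k) * g \<delta> p - cis (p * of_int k) * g 0 p)) \<le> e / 2 * (pi - - pi)"
    proof (rule integral_bound)
      show "continuous_on {-pi..pi} (\<lambda>p. cis (p * of_int k) * g \<delta> p - cis (p * of_int k) * g 0 p)"
        using \<delta>2 by (auto intro!: continuous_intros cp)
    qed (use b in auto)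
    ultimately have "norm (fc (g \<delta>) k - fc (g 0) k) \<le> e / 2"
      using pi_gt_zero by (simp add: norm_divide divide_le_eq mult.commute)
    then show "dist (fc (g \<delta>) k) (fc (g 0) k) < e" using e by (simp add: dist_norm)
  qed
qed

lemma At_vals:
  assumes m: "m > 0" and e: "\<epsilon> > 0"
  shows "A1t (\<epsilon> * of_int a) (\<epsilon> * of_int s) m \<epsilon> = fc (gF1 (m * \<epsilon>) 0 s) a"
    and "A2t (\<epsilon> * of_int a) (\<epsilon> * of_int s) m \<epsilon> = fc (gF2 (m * \<epsilon>) 0 s) a"
proof -
  have mu: "m * \<epsilon> > 0" using m e by simp
  have sub: "{0..1/2} \<times> {-pi..pi} \<subseteq> SD" unfolding SD_def by auto
  have ev: "eventually (\<lambda>\<delta>. \<delta> \<in> {0<..<1}) (at_right (0::real))"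
    by (rule eventually_at_right_real) simp
  have l1: "((\<lambda>\<delta>. fst (A_sol m \<epsilon> \<delta>) (\<epsilon> * of_int a) (\<epsilon> * of_int s)) \<longlongrightarrow> fc (gF1 (m * \<epsilon>) 0 s) a) (at_right 0)"
  proof (subst tendsto_cong)
    show "eventually (\<lambda>\<delta>. fst (A_sol m \<epsilon> \<delta>) (\<epsilon> * of_int a) (\<epsilon> * of_int s) = fc (gF1 (m * \<epsilon>) \<delta> s) a) (at_right 0)"
      by (rule eventually_mono[OF ev]) (use A_sol_val(1)[OF m e] in auto)
    show "((\<lambda>\<delta>. fc (gF1 (m * \<epsilon>) \<delta> s) a) \<longlongrightarrow> fc (gF1 (m * \<epsilon>) 0 s) a) (at_right 0)"
      by (rule fc_limit[where g="\<lambda>\<delta> p. gF1 (m * \<epsilon>) \<delta> s p"]) (rule continuous_on_subset[OF cont_gF(1)[OF mu] sub])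
  qed
  have l2: "((\<lambda>\<delta>. snd (A_sol m \<epsilon> \<delta>) (\<epsilon> * of_int a) (\<epsilon> * of_int s)) \<longlongrightarrow> fc (gF2 (m * \<epsilon>) 0 s) a) (at_right 0)"
  proof (subst tendsto_cong)
    show "eventually (\<lambda>\<delta>. snd (A_sol m \<epsilon> \<delta>) (\<epsilon> * of_int a) (\<epsilon> * of_int s) = fc (gF2 (m * \<epsilon>) \<delta> s) a) (at_right 0)"
      by (rule eventually_mono[OF ev]) (use A_sol_val(2)[OF m e] in auto)
    show "((\<lambda>\<delta>. fc (gF2 (m * \<epsilon>) \<delta> s) a) \<longlongrightarrow> fc (gF2 (m * \<epsilon>) 0 s) a) (at_right 0)"
      by (rule fc_limit[where g="\<lambda>\<delta> p. gF2 (m * \<epsilon>) \<delta> s p"]) (rule continuous_on_subset[OF cont_gF(2)[OF mu] sub])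
  qed
  show "A1t (\<epsilon> * of_int a) (\<epsilon> * of_int s) m \<epsilon> = fc (gF1 (m * \<epsilon>) 0 s) a"
    unfolding A1t_def by (rule tendsto_Lim[OF _ l1]) simp
  show "A2t (\<epsilon> * of_int a) (\<epsilon> * of_int s) m \<epsilon> = fc (gF2 (m * \<epsilon>) 0 s) a"
    unfolding A2t_def by (rule tendsto_Lim[OF _ l2]) simp
qed


definition om :: "real \<Rightarrow> real \<Rightarrow> real" where "om \<mu> q = arccos (cos q / sqrt (1 + \<mu>\<^sup>2))"
definition Rr :: "real \<Rightarrow> real \<Rightarrow> real" where "Rr \<mu> q = sqrt (\<mu>\<^sup>2 + (sin q)\<^sup>2)"

lemma A_pos: "sqrt (1 + \<mu>\<^sup>2) > 0"
  by (simp add: add_pos_nonneg)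

lemma Rr_pos: "\<mu> > 0 \<Longrightarrow> Rr \<mu> q > 0"
  unfolding Rr_def by (simp add: add_pos_nonneg)

lemma cq_bound: "\<bar>cos q / sqrt (1 + \<mu>\<^sup>2)\<bar> \<le> 1"
proof -
  have "sqrt (1 + \<mu>\<^sup>2) \<ge> 1" by simp
  moreover have "\<bar>cos q\<bar> \<le> 1" by simp
  ultimately have "\<bar>cos q\<bar> \<le> sqrt (1 + \<mu>\<^sup>2)" by linarith
  moreover have "\<bar>cos q / sqrt (1 + \<mu>\<^sup>2)\<bar> = \<bar>cos q\<bar> / sqrt (1 + \<mu>\<^sup>2)"
    using A_pos[of \<mu>] by (simp add: abs_divide)
  ultimately show ?thesis using divide_le_eq_1_pos[OF A_pos[of \<mu>], of "\<bar>cos q\<bar>"] by simp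
qed

lemma sqrt_key: "sqrt (1 - (cos q / sqrt (1 + \<mu>\<^sup>2))\<^sup>2) = Rr \<mu> q / sqrt (1 + \<mu>\<^sup>2)"
proof (rule real_sqrt_unique)
  have A2: "(sqrt (1 + \<mu>\<^sup>2))\<^sup>2 = 1 + \<mu>\<^sup>2" by (simp add: add_nonneg_nonneg)
  have R2: "(Rr \<mu> q)\<^sup>2 = \<mu>\<^sup>2 + (sin q)\<^sup>2" unfolding Rr_def by (simp add: add_nonneg_nonneg)
  show "(Rr \<mu> q / sqrt (1 + \<mu>\<^sup>2))\<^sup>2 = 1 - (cos q / sqrt (1 + \<mu>\<^sup>2))\<^sup>2"
    using A_pos[of \<mu>] unfolding power_divide A2 R2
    by (simp add: field_simps)
  show "0 \<le> Rr \<mu> q / sqrt (1 + \<mu>\<^sup>2)" unfolding Rr_def by simp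
qed

lemma cq_bound2: "-1 \<le> cos q / sqrt (1 + \<mu>\<^sup>2) \<and> cos q / sqrt (1 + \<mu>\<^sup>2) \<le> 1"
  using cq_bound[of q \<mu>] by (simp only: abs_le_iff) auto

lemma cos_om: "cos (om \<mu> q) = cos q / sqrt (1 + \<mu>\<^sup>2)"
  unfolding om_def using cq_bound2[of q \<mu>] by (intro cos_arccos) auto

lemma sin_om: "sin (om \<mu> q) = Rr \<mu> q / sqrt (1 + \<mu>\<^sup>2)"
  unfolding om_def using cq_bound2[of q \<mu>] by (simp only: sin_arccos sqrt_key)

lemma tauf0: "tauf \<mu> 0 q = complex_of_real (2 * (cos q / sqrt (1 + \<mu>\<^sup>2)))"
  unfolding tauf_eq kap_def by simp

lemma ff0:
  assumes "\<mu> > 0"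
  shows "ffun (tauf \<mu> 0 q) = \<i> * complex_of_real (2 * (Rr \<mu> q / sqrt (1 + \<mu>\<^sup>2)))"
proof -
  define c where "c = cos q / sqrt (1 + \<mu>\<^sup>2)"
  have c1: "\<bar>c\<bar> < 1"
  proof -
    have "sqrt (1 + \<mu>\<^sup>2) > 1" using assms by simp
    moreover have "\<bar>cos q\<bar> \<le> 1" by simp
    ultimately have "\<bar>cos q\<bar> < sqrt (1 + \<mu>\<^sup>2)" by linarith
    moreover have "\<bar>cos q / sqrt (1 + \<mu>\<^sup>2)\<bar> = \<bar>cos q\<bar> / sqrt (1 + \<mu>\<^sup>2)"
      using A_pos[of \<mu>] by (simp add: abs_divide)
    ultimately show ?thesis unfolding c_def using divide_less_eq_1_pos[OF A_pos[of \<mu>], of "\<bar>cos q\<bar>"] by simp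
  qed
  have "ffun (tauf \<mu> 0 q) = \<i> * complex_of_real (sqrt (4 - (2 * c)\<^sup>2))"
    unfolding tauf0 c_def[symmetric] by (rule ffun_real) (use c1 in auto)
  also have "sqrt (4 - (2 * c)\<^sup>2) = 2 * sqrt (1 - c\<^sup>2)"
  proof -
    have e: "4 - (2 * c)\<^sup>2 = 4 * (1 - c\<^sup>2)" by (simp add: power2_eq_square algebra_simps)
    have s4: "sqrt 4 = (2::real)" by (rule real_sqrt_unique) auto
    show ?thesis unfolding e real_sqrt_mult s4 ..
  qed
  finally show ?thesis unfolding c_def sqrt_key .
qed

lemma ls0:
  assumes "\<mu> > 0"
  shows "lsf (tauf \<mu> 0 q) = cis (- om \<mu> q)" and "luf (tauf \<mu> 0 q) = cis (om \<mu> q)"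
proof -
  show "lsf (tauf \<mu> 0 q) = cis (- om \<mu> q)"
    unfolding lsf_def ff0[OF assms] unfolding tauf0 by (simp add: complex_eq_iff cos_om sin_om)
  show "luf (tauf \<mu> 0 q) = cis (om \<mu> q)"
    unfolding luf_def ff0[OF assms] unfolding tauf0 by (simp add: complex_eq_iff cos_om sin_om)
qed

lemma W0:
  "W11 \<mu> 0 q = complex_of_real (1 / sqrt (1 + \<mu>\<^sup>2)) * cis q"
  "W12 \<mu> 0 q = complex_of_real (\<mu> / sqrt (1 + \<mu>\<^sup>2))"
  "W21 \<mu> 0 q = - complex_of_real (\<mu> / sqrt (1 + \<mu>\<^sup>2))"
  "W22 \<mu> 0 q = complex_of_real (1 / sqrt (1 + \<mu>\<^sup>2)) * cis (- q)"
  unfolding W11_def W12_def W21_def W22_def cA_def cB_def by simp_all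


lemma divI: "y \<noteq> 0 \<Longrightarrow> x = z * y \<Longrightarrow> x / y = (z::complex)"
  by simp

lemma P0:
  assumes "\<mu> > 0"
  shows "Ps1 (W11 \<mu> 0 q) (W12 \<mu> 0 q) (W21 \<mu> 0 q) (W22 \<mu> 0 q) 0 2 = \<i> * complex_of_real (\<mu> / Rr \<mu> q)"
    and "Pu1 (W11 \<mu> 0 q) (W12 \<mu> 0 q) (W21 \<mu> 0 q) (W22 \<mu> 0 q) 0 2 = - \<i> * complex_of_real (\<mu> / Rr \<mu> q)"
    and "Ps2 (W11 \<mu> 0 q) (W12 \<mu> 0 q) (W21 \<mu> 0 q) (W22 \<mu> 0 q) 0 2 = complex_of_real (1 + sin q / Rr \<mu> q)"
    and "Pu2 (W11 \<mu> 0 q) (W12 \<mu> 0 q) (W21 \<mu> 0 q) (W22 \<mu> 0 q) 0 2 = complex_of_real (1 - sin q / Rr \<mu> q)"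
proof -
  have A: "sqrt (1 + \<mu>\<^sup>2) > 0" by (rule A_pos)
  have R: "Rr \<mu> q > 0" using Rr_pos[OF assms] .
  note T = tauf_def[symmetric]
  show "Ps1 (W11 \<mu> 0 q) (W12 \<mu> 0 q) (W21 \<mu> 0 q) (W22 \<mu> 0 q) 0 2 = \<i> * complex_of_real (\<mu> / Rr \<mu> q)"
    unfolding Ps1_def unfolding T unfolding ff0[OF assms] ls0[OF assms] unfolding W0
    by (rule divI) (use A R in \<open>simp_all add: complex_eq_iff field_simps\<close>)
  show "Pu1 (W11 \<mu> 0 q) (W12 \<mu> 0 q) (W21 \<mu> 0 q) (W22 \<mu> 0 q) 0 2 = - \<i> * complex_of_real (\<mu> / Rr \<mu> q)"
    unfolding Pu1_def unfolding T unfolding ff0[OF assms] ls0[OF assms] unfolding W0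
    by (rule divI) (use A R in \<open>simp_all add: complex_eq_iff field_simps\<close>)
  show "Ps2 (W11 \<mu> 0 q) (W12 \<mu> 0 q) (W21 \<mu> 0 q) (W22 \<mu> 0 q) 0 2 = complex_of_real (1 + sin q / Rr \<mu> q)"
    unfolding Ps2_def unfolding T unfolding ff0[OF assms] ls0[OF assms] unfolding W0
    by (rule divI) (use A R in \<open>simp_all add: complex_eq_iff field_simps cos_om sin_om\<close>)
  show "Pu2 (W11 \<mu> 0 q) (W12 \<mu> 0 q) (W21 \<mu> 0 q) (W22 \<mu> 0 q) 0 2 = complex_of_real (1 - sin q / Rr \<mu> q)"
    unfolding Pu2_def unfolding T unfolding ff0[OF assms] ls0[OF assms] unfolding W0
    by (rule divI) (use A R in \<open>simp_all add: complex_eq_iff field_simps cos_om sin_om\<close>)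
qed

definition H1 :: "real \<Rightarrow> int \<Rightarrow> real \<Rightarrow> complex" where
  "H1 \<mu> n q = cis (- (om \<mu> q * of_int n)) * (\<i> * complex_of_real (\<mu> / Rr \<mu> q))"
definition H2 :: "real \<Rightarrow> int \<Rightarrow> real \<Rightarrow> complex" where
  "H2 \<mu> n q = cis (- (om \<mu> q * of_int n)) * complex_of_real (1 + sin q / Rr \<mu> q)"

lemma gF0:
  assumes "\<mu> > 0"
  shows "gF1 \<mu> 0 n q = (if 0 \<le> n then H1 \<mu> n q else cis (om \<mu> q * of_int n) * (\<i> * complex_of_real (\<mu> / Rr \<mu> q)))"
    and "gF2 \<mu> 0 n q = (if 0 \<le> n then H2 \<mu> n q else - cis (om \<mu> q * of_int n) * complex_of_real (1 - sin q / Rr \<mu> q))"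
proof -
  have ls: "lsf (W11 \<mu> 0 q + W22 \<mu> 0 q) = cis (- om \<mu> q)" using ls0(1)[OF assms, of q] unfolding tauf_def .
  have pw1: "cis (- om \<mu> q) ^ nat n = cis (- (om \<mu> q * of_int n))" if "0 \<le> n"
  proof -
    have "cis (- om \<mu> q) ^ nat n = cis (real (nat n) * (- om \<mu> q))" by (rule Complex.DeMoivre)
    also have "real (nat n) = of_int n" using that by simp
    finally show ?thesis by (simp add: mult.commute)
  qed
  have pw2: "cis (- om \<mu> q) ^ nat (- n) = cis (om \<mu> q * of_int n)" if "\<not> 0 \<le> n"
  proof -
    have "cis (- om \<mu> q) ^ nat (- n) = cis (real (nat (- n)) * (- om \<mu> q))" by (rule Complex.DeMoivre)
    also have "real (nat (- n)) = - of_int n" using that by simp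
    finally show ?thesis by (simp add: mult.commute)
  qed
  show "gF1 \<mu> 0 n q = (if 0 \<le> n then H1 \<mu> n q else cis (om \<mu> q * of_int n) * (\<i> * complex_of_real (\<mu> / Rr \<mu> q)))"
    unfolding gF1_def G1_def ls P0[OF assms] H1_def using pw1 pw2 by auto
  show "gF2 \<mu> 0 n q = (if 0 \<le> n then H2 \<mu> n q else - cis (om \<mu> q * of_int n) * complex_of_real (1 - sin q / Rr \<mu> q))"
    unfolding gF2_def G2_def ls P0[OF assms] H2_def using pw1 pw2 by auto
qed


lemma integral_period_shift:
  fixes f :: "real \<Rightarrow> complex"
  assumes c: "continuous_on UNIV f" and per: "\<And>q. f (q + 2 * pi) = f q"
  shows "integral {-pi..pi} (\<lambda>q. f (q + pi)) = integral {-pi..pi} f"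
proof -
  have int: "f integrable_on {a..b}" for a b
    by (rule integrable_continuous_interval) (rule continuous_on_subset[OF c], simp)
  have "integral {-pi..pi} (\<lambda>q. f (q + pi)) = integral {-pi..pi} (f \<circ> (+) pi)"
    by (simp add: o_def add.commute)
  also have "\<dots> = integral {-pi + pi..pi + pi} f" by (rule integral_shift_Icc_real)
  also have "\<dots> = integral {0..2 * pi} f" by simp
  also have "\<dots> = integral {0..pi} f + integral {pi..2 * pi} f"
    by (rule Henstock_Kurzweil_Integration.integral_combine[symmetric]) (auto intro: int)
  also have "integral {pi..2 * pi} f = integral {-pi..0} f"
  proof -
    have "integral {-pi..0} (f \<circ> (+) (2 * pi)) = integral {-pi + 2 * pi..0 + 2 * pi} f"
      by (rule integral_shift_Icc_real)
    moreover have "f \<circ> (+) (2 * pi) = f" using per by (auto simp: o_def add.commute)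
    ultimately show ?thesis by simp
  qed
  also have "integral {0..pi} f + integral {-pi..0} f = integral {-pi..pi} f"
    by (subst add.commute, rule Henstock_Kurzweil_Integration.integral_combine) (auto intro: int)
  finally show ?thesis .
qed

lemma cis_pi_int: "cis (pi * of_int k) = (if even k then 1 else -1)"
  by (simp add: complex_eq_iff)

lemma fc_shift_pi:
  assumes c: "continuous_on UNIV h" and per: "\<And>q. h (q + 2 * pi) = h q"
  shows "fc h k = (if even k then 1 else -1) * fc (\<lambda>q. h (q + pi)) k"
proof -
  define f where "f q = cis (q * of_int k) * h q" for q
  have cf: "continuous_on UNIV f" unfolding f_def by (intro continuous_intros c)
  have c2: "cis (2 * (pi * of_int k)) = 1"
  proof -
    have "2 * (pi * of_int k) = pi * of_int (2 * k)" by simp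
    then show ?thesis by (simp only: cis_pi_int) simp
  qed
  have pf: "f (q + 2 * pi) = f q" for q
    unfolding f_def per by (simp add: distrib_right cis_mult[symmetric] c2 mult.assoc)
  have "integral {-pi..pi} f = integral {-pi..pi} (\<lambda>q. f (q + pi))"
    by (rule integral_period_shift[OF cf pf, symmetric])
  also have "(\<lambda>q. f (q + pi)) = (\<lambda>q. cis (pi * of_int k) * (cis (q * of_int k) * h (q + pi)))"
  proof (rule ext)
    fix q
    have "cis ((q + pi) * of_int k) = cis (pi * of_int k) * cis (q * of_int k)"
      by (simp add: cis_mult distrib_right add.commute)
    then show "f (q + pi) = cis (pi * of_int k) * (cis (q * of_int k) * h (q + pi))"
      unfolding f_def by simp
  qed
  also have "integral {-pi..pi} \<dots> = cis (pi * of_int k) * integral {-pi..pi} (\<lambda>q. cis (q * of_int k) * h (q + pi))"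
    by simp
  finally show ?thesis unfolding fc_def f_def cis_pi_int by simp
qed

lemma integral_scale:
  fixes F :: "real \<Rightarrow> complex"
  assumes e: "\<epsilon> > 0" and c: "continuous_on UNIV F"
  shows "integral {-pi/\<epsilon>..pi/\<epsilon>} (\<lambda>p. F (p * \<epsilon>)) = integral {-pi..pi} F / complex_of_real \<epsilon>"
proof -
  have "(F has_integral integral {-pi..pi} F) (cbox (-pi) pi)"
    using integrable_continuous_interval[OF continuous_on_subset[OF c]] by (simp add: has_integral_iff)
  from has_integral_affinity'[OF this e, of 0]
  have "((\<lambda>x. F (\<epsilon> * x)) has_integral (integral {-pi..pi} F /\<^sub>R \<epsilon>)) {-pi/\<epsilon>..pi/\<epsilon>}"
    by (simp add: divide_inverse mult.commute)
  then show ?thesis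
    by (simp add: integral_unique mult.commute scaleR_conv_of_real divide_inverse)
qed


lemma om_shift: "om \<mu> (q + pi) = pi - om \<mu> q"
  unfolding om_def using cq_bound2[of q \<mu>] by (simp add: arccos_minus)

lemma Rr_shift: "Rr \<mu> (q + pi) = Rr \<mu> q"
  unfolding Rr_def by simp

lemma om_per: "om \<mu> (q + 2 * pi) = om \<mu> q"
  unfolding om_def by simp

lemma Rr_per: "Rr \<mu> (q + 2 * pi) = Rr \<mu> q"
  unfolding Rr_def by simp

lemma cont_om: "continuous_on A (om \<mu>)"
  unfolding om_def using cq_bound2 using A_pos[of \<mu>] by (intro continuous_intros) auto

lemma cont_Rr: "continuous_on A (Rr \<mu>)"
  unfolding Rr_def by (intro continuous_intros)

lemma sgn_int: "(if even n then 1 else -1) = cis (pi * of_int n)"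
  by (simp add: cis_pi_int)

lemma gF_per:
  assumes "\<mu> > 0"
  shows "gF1 \<mu> 0 n (q + 2 * pi) = gF1 \<mu> 0 n q" "gF2 \<mu> 0 n (q + 2 * pi) = gF2 \<mu> 0 n q"
  unfolding gF0[OF assms] H1_def H2_def om_per Rr_per by simp_all

lemma gF_shift:
  assumes "\<mu> > 0" "n < 0"
  shows "gF1 \<mu> 0 n (q + pi) = (if even n then 1 else -1) * H1 \<mu> n q"
    and "gF2 \<mu> 0 n (q + pi) = - (if even n then 1 else -1) * H2 \<mu> n q"
proof -
  have c: "cis (om \<mu> (q + pi) * of_int n) = cis (pi * of_int n) * cis (- (om \<mu> q * of_int n))"
    unfolding om_shift by (simp add: cis_mult left_diff_distrib)
  show "gF1 \<mu> 0 n (q + pi) = (if even n then 1 else -1) * H1 \<mu> n q"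
    unfolding gF0[OF assms(1)] H1_def sgn_int c Rr_shift using assms(2) by simp
  show "gF2 \<mu> 0 n (q + pi) = - (if even n then 1 else -1) * H2 \<mu> n q"
    unfolding gF0[OF assms(1)] H2_def sgn_int c Rr_shift using assms(2) by (simp add: diff_conv_add_uminus)
qed

lemma fc_gF:
  assumes "\<mu> > 0"
  shows "fc (gF1 \<mu> 0 n) k = (if n < 0 \<and> even (k + n + 1) then -1 else 1) * fc (H1 \<mu> n) k"
    and "fc (gF2 \<mu> 0 n) k = (if n < 0 \<and> even (k + n) then -1 else 1) * fc (H2 \<mu> n) k"
proof -
  note C = cont_gF_p[OF assms order_refl zero_less_one, of UNIV]
  show "fc (gF1 \<mu> 0 n) k = (if n < 0 \<and> even (k + n + 1) then -1 else 1) * fc (H1 \<mu> n) k"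
  proof (cases "n < 0")
    case True
    have "fc (gF1 \<mu> 0 n) k = (if even k then 1 else -1) * fc (\<lambda>q. gF1 \<mu> 0 n (q + pi)) k"
      by (rule fc_shift_pi[OF C(1) gF_per(1)[OF assms]])
    also have "\<dots> = (if even k then 1 else -1) * ((if even n then 1 else -1) * fc (H1 \<mu> n) k)"
      unfolding gF_shift(1)[OF assms True] fc_cmult ..
    finally show ?thesis using True by auto
  next
    case False
    then have "gF1 \<mu> 0 n = H1 \<mu> n" unfolding gF0[OF assms] by auto
    then show ?thesis using False by simp
  qed
  show "fc (gF2 \<mu> 0 n) k = (if n < 0 \<and> even (k + n) then -1 else 1) * fc (H2 \<mu> n) k"
  proof (cases "n < 0")
    case True
    have "fc (gF2 \<mu> 0 n) k = (if even k then 1 else -1) * fc (\<lambda>q. gF2 \<mu> 0 n (q + pi)) k"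
      by (rule fc_shift_pi[OF C(2) gF_per(2)[OF assms]])
    also have "\<dots> = (if even k then 1 else -1) * (- (if even n then 1 else -1) * fc (H2 \<mu> n) k)"
      unfolding gF_shift(2)[OF assms True] fc_cmult ..
    finally show ?thesis using True by auto
  next
    case False
    then have "gF2 \<mu> 0 n = H2 \<mu> n" unfolding gF0[OF assms] by auto
    then show ?thesis using False by simp
  qed
qed


lemma even_real_of_int: "even_real (of_int j) \<longleftrightarrow> even j"
  unfolding even_real_def by auto

lemma exp_cis: "exp (\<i> * complex_of_real \<theta>) = cis \<theta>"
  by (simp add: cis_conv_exp)

theorem proposition1:
  fixes m \<epsilon> x t :: real
  assumes "m > 0" and "\<epsilon> > 0" and "x / \<epsilon> \<in> \<int>" and "t / \<epsilon> \<in> \<int>"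
  shows "(A1t x t m \<epsilon> = sgnA 1 x t \<epsilon> * (\<i> * complex_of_real (m * \<epsilon>\<^sup>2 / (2 * pi))) *
           integral {- pi / \<epsilon> .. pi / \<epsilon>}
             (\<lambda>p. exp (\<i> * complex_of_real (p * x - omega m \<epsilon> p * t))
                  / complex_of_real (sqrt (m\<^sup>2 * \<epsilon>\<^sup>2 + (sin (p * \<epsilon>))\<^sup>2)))) \<and>
         A2t x t m \<epsilon> = sgnA 2 x t \<epsilon> * complex_of_real (\<epsilon> / (2 * pi)) *
           integral {- pi / \<epsilon> .. pi / \<epsilon>}
             (\<lambda>p. complex_of_real (1 + sin (p * \<epsilon>) / sqrt (m\<^sup>2 * \<epsilon>\<^sup>2 + (sin (p * \<epsilon>))\<^sup>2))
                  * exp (\<i> * complex_of_real (p * x - omega m \<epsilon> p * t)))"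
proof -
  note m = assms(1) and e = assms(2)
  obtain k where k: "x / \<epsilon> = of_int k" using assms(3) by (auto elim: Ints_cases)
  obtain n where n: "t / \<epsilon> = of_int n" using assms(4) by (auto elim: Ints_cases)
  have x: "x = \<epsilon> * of_int k" using k e by (simp add: field_simps)
  have t: "t = \<epsilon> * of_int n" using n e by (simp add: field_simps)
  define \<mu> where "\<mu> = m * \<epsilon>"
  have mu: "\<mu> > 0" unfolding \<mu>_def using m e by simp
  have mu2: "m\<^sup>2 * \<epsilon>\<^sup>2 = \<mu>\<^sup>2" unfolding \<mu>_def by (simp add: power_mult_distrib)
  define F1 where "F1 q = cis (q * of_int k - om \<mu> q * of_int n) / complex_of_real (Rr \<mu> q)" for q
  define F2 where "F2 q = complex_of_real (1 + sin q / Rr \<mu> q) * cis (q * of_int k - om \<mu> q * of_int n)" for q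
  have Rnz: "Rr \<mu> q \<noteq> 0" for q using Rr_pos[OF mu] by (simp add: less_imp_neq[symmetric])
  have cF1: "continuous_on UNIV F1" unfolding F1_def
    by (intro continuous_intros cont_om cont_Rr) (auto simp: Rnz)
  have cF2: "continuous_on UNIV F2" unfolding F2_def
    by (intro continuous_intros cont_om cont_Rr) (auto simp: Rnz)
  have th: "p * x - omega m \<epsilon> p * t = (p * \<epsilon>) * of_int k - om \<mu> (p * \<epsilon>) * of_int n" for p
    unfolding x t omega_def om_def \<mu>_def using e by (simp add: power_mult_distrib field_simps)
  have sq: "sqrt (m\<^sup>2 * \<epsilon>\<^sup>2 + (sin (p * \<epsilon>))\<^sup>2) = Rr \<mu> (p * \<epsilon>)" for p
    unfolding Rr_def mu2 ..
  have I1: "integral {- pi / \<epsilon> .. pi / \<epsilon>}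
             (\<lambda>p. exp (\<i> * complex_of_real (p * x - omega m \<epsilon> p * t))
                  / complex_of_real (sqrt (m\<^sup>2 * \<epsilon>\<^sup>2 + (sin (p * \<epsilon>))\<^sup>2)))
       = integral {-pi..pi} F1 / complex_of_real \<epsilon>"
  proof -
    have "(\<lambda>p. exp (\<i> * complex_of_real (p * x - omega m \<epsilon> p * t))
                  / complex_of_real (sqrt (m\<^sup>2 * \<epsilon>\<^sup>2 + (sin (p * \<epsilon>))\<^sup>2))) = (\<lambda>p. F1 (p * \<epsilon>))"
      unfolding th sq exp_cis F1_def ..
    then show ?thesis using integral_scale[OF e cF1] by simp
  qed
  have I2: "integral {- pi / \<epsilon> .. pi / \<epsilon>}
             (\<lambda>p. complex_of_real (1 + sin (p * \<epsilon>) / sqrt (m\<^sup>2 * \<epsilon>\<^sup>2 + (sin (p * \<epsilon>))\<^sup>2))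
                  * exp (\<i> * complex_of_real (p * x - omega m \<epsilon> p * t)))
       = integral {-pi..pi} F2 / complex_of_real \<epsilon>"
  proof -
    have "(\<lambda>p. complex_of_real (1 + sin (p * \<epsilon>) / sqrt (m\<^sup>2 * \<epsilon>\<^sup>2 + (sin (p * \<epsilon>))\<^sup>2))
                  * exp (\<i> * complex_of_real (p * x - omega m \<epsilon> p * t))) = (\<lambda>p. F2 (p * \<epsilon>))"
      unfolding th sq exp_cis F2_def ..
    then show ?thesis using integral_scale[OF e cF2] by simp
  qed
  have H1F: "fc (H1 \<mu> n) k = \<i> * complex_of_real \<mu> * integral {-pi..pi} F1 / (2 * pi)"
  proof -
    have "(\<lambda>q. cis (q * of_int k) * H1 \<mu> n q) = (\<lambda>q. (\<i> * complex_of_real \<mu>) * F1 q)"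
    proof (rule ext)
      fix q
      have e: "cis (q * of_int k) * cis (- (om \<mu> q * of_int n)) = cis (q * of_int k - om \<mu> q * of_int n)"
        by (simp add: cis_mult)
      show "cis (q * of_int k) * H1 \<mu> n q = (\<i> * complex_of_real \<mu>) * F1 q"
        unfolding H1_def F1_def mult.assoc[symmetric] e by simp
    qed
    then show ?thesis unfolding fc_def by simp
  qed
  have H2F: "fc (H2 \<mu> n) k = integral {-pi..pi} F2 / (2 * pi)"
  proof -
    have "(\<lambda>q. cis (q * of_int k) * H2 \<mu> n q) = F2"
    proof (rule ext)
      fix q
      have e: "cis (q * of_int k) * cis (- (om \<mu> q * of_int n)) = cis (q * of_int k - om \<mu> q * of_int n)"
        by (simp add: cis_mult)
      show "cis (q * of_int k) * H2 \<mu> n q = F2 q"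
        unfolding H2_def F2_def mult.assoc[symmetric] e by simp
    qed
    then show ?thesis unfolding fc_def by simp
  qed
  have tn: "t < 0 \<longleftrightarrow> n < 0" unfolding t using e by (simp add: mult_less_0_iff)
  have s1: "sgnA 1 x t \<epsilon> = (if n < 0 \<and> even (k + n + 1) then -1 else 1)"
  proof -
    have h: "(x + t) / \<epsilon> + real 1 = of_int (k + n + 1)" unfolding x t using e by (simp add: field_simps)
    show ?thesis unfolding sgnA_def tn h even_real_of_int by simp
  qed
  have s2: "sgnA 2 x t \<epsilon> = (if n < 0 \<and> even (k + n) then -1 else 1)"
  proof -
    have h: "(x + t) / \<epsilon> + real 2 = of_int (k + n + 2)" unfolding x t using e by (simp add: field_simps)
    show ?thesis unfolding sgnA_def tn h even_real_of_int by simp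
  qed
  have A1: "A1t x t m \<epsilon> = fc (gF1 \<mu> 0 n) k" unfolding x t \<mu>_def by (rule At_vals(1)[OF m e])
  have A2: "A2t x t m \<epsilon> = fc (gF2 \<mu> 0 n) k" unfolding x t \<mu>_def by (rule At_vals(2)[OF m e])
  show ?thesis
  proof
    show "A1t x t m \<epsilon> = sgnA 1 x t \<epsilon> * (\<i> * complex_of_real (m * \<epsilon>\<^sup>2 / (2 * pi))) *
           integral {- pi / \<epsilon> .. pi / \<epsilon>}
             (\<lambda>p. exp (\<i> * complex_of_real (p * x - omega m \<epsilon> p * t))
                  / complex_of_real (sqrt (m\<^sup>2 * \<epsilon>\<^sup>2 + (sin (p * \<epsilon>))\<^sup>2)))"
      unfolding A1 I1 fc_gF(1)[OF mu] H1F s1 unfolding \<mu>_def using e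
      by (simp add: power2_eq_square field_simps)
    show "A2t x t m \<epsilon> = sgnA 2 x t \<epsilon> * complex_of_real (\<epsilon> / (2 * pi)) *
           integral {- pi / \<epsilon> .. pi / \<epsilon>}
             (\<lambda>p. complex_of_real (1 + sin (p * \<epsilon>) / sqrt (m\<^sup>2 * \<epsilon>\<^sup>2 + (sin (p * \<epsilon>))\<^sup>2))
                  * exp (\<i> * complex_of_real (p * x - omega m \<epsilon> p * t)))"
      unfolding A2 I2 fc_gF(2)[OF mu] H2F s2 using e
      by (simp add: field_simps)
  qed
qed


end
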